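(* Let $n\geq 5$ and $3\leq\Delta\leq n-2$ be integers, and let $U$ be a connected unicyclic graph with $n$ vertices and maximum degree $\Delta$. (i) If $3\leq\Delta\leq\lfloor\frac{n+1}{2}\rfloor$, then $$SO(U)\geq \Delta\sqrt{\Delta^2+4}+\sqrt{8}\,(n-2\Delta+2)+\sqrt{5}\,(\Delta-2),$$ with equality if and only if $U$ is isomorphic to a graph $U_\Delta$, i.e. a graph consisting of a cycle $C$ (of any length at least $3$) together with $\Delta-2$ paths, each with at least $2$ edges, each having one endpoint at the same vertex $v_0$ of $C$, and these paths pairwise sharing no vertex other than $v_0$ and sharing no vertex with $C$ other than $v_0$. (ii) If $\lfloor\frac{n+1}{2}\rfloor<\Delta\leq n-2$, then $$SO(U)\geq (n-\Delta+1)\sqrt{\Delta^2+4}+(2\Delta-n-1)\sqrt{\Delta^2+1}+\sqrt{5}\,(n-\Delta-1)+\sqrt{8},$$ with equality if and only if $U\cong U_{n,\Delta}$, where $U_{n,\Delta}$ is the graph obtained from a triangle $C_3$ by attaching, at one vertex $v_0$ of the triangle, $2\Delta-n-1$ pendant edges and $n-\Delta-1$ pendant paths with $2$ edges each.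
   Context: All graphs are finite, simple and undirected; $d_G(v)$ denotes the degree of a vertex $v$ in $G$. A unicyclic graph is a connected graph with exactly one cycle (equivalently, $|E|=|V|$). The Sombor index of a graph $G$ is $SO(G)=\sum_{uv\in E(G)}\sqrt{d_G(u)^2+d_G(v)^2}$. *)

theory Defs
  imports Complex_Main
begin

definition simple_graph :: "'a set \<Rightarrow> 'a set set \<Rightarrow> bool" where
  "simple_graph V E \<longleftrightarrow> finite V \<and>
     (\<forall>e\<in>E. \<exists>u v. e = {u, v} \<and> u \<noteq> v \<and> u \<in> V \<and> v \<in> V)"

definition degree :: "'a set set \<Rightarrow> 'a \<Rightarrow> nat" where
  "degree E v = card {e \<in> E. v \<in> e}"

definition max_degree :: "'a set \<Rightarrow> 'a set set \<Rightarrow> nat" where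
  "max_degree V E = Max (degree E ` V)"

definition adj_rel :: "'a set set \<Rightarrow> ('a \<times> 'a) set" where
  "adj_rel E = {(x, y). {x, y} \<in> E}"

definition connected_graph :: "'a set \<Rightarrow> 'a set set \<Rightarrow> bool" where
  "connected_graph V E \<longleftrightarrow> V \<noteq> {} \<and> (\<forall>u\<in>V. \<forall>v\<in>V. (u, v) \<in> (adj_rel E)\<^sup>*)"

definition unicyclic :: "'a set \<Rightarrow> 'a set set \<Rightarrow> bool" where
  "unicyclic V E \<longleftrightarrow> connected_graph V E \<and> card E = card V"

definition sombor :: "'a set set \<Rightarrow> real" where
  "sombor E = (\<Sum>e\<in>E. sqrt (\<Sum>v\<in>e. real (degree E v) ^ 2))"

definition graph_iso :: "'a set \<Rightarrow> 'a set set \<Rightarrow> 'b set \<Rightarrow> 'b set set \<Rightarrow> bool" where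
  "graph_iso V E V' E' \<longleftrightarrow> (\<exists>f. bij_betw f V V' \<and>
     (\<forall>x\<in>V. \<forall>y\<in>V. {x, y} \<in> E \<longleftrightarrow> {f x, f y} \<in> E'))"

definition path_edges :: "'a list \<Rightarrow> 'a set set" where
  "path_edges xs = {{xs ! i, xs ! Suc i} | i. Suc i < length xs}"

definition cycle_edges :: "'a list \<Rightarrow> 'a set set" where
  "cycle_edges cs = path_edges cs \<union> {{last cs, hd cs}}"

definition is_U_Delta :: "'a set \<Rightarrow> 'a set set \<Rightarrow> nat \<Rightarrow> bool" where
  "is_U_Delta V E \<Delta> \<longleftrightarrow> (\<exists>cs ps.
     distinct cs \<and> length cs \<ge> 3 \<and> length ps = \<Delta> - 2 \<and>
     (\<forall>p\<in>set ps. distinct p \<and> length p \<ge> 3 \<and> hd p = hd cs \<and> set p \<inter> set cs = {hd cs}) \<and>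
     (\<forall>i<length ps. \<forall>j<length ps. i \<noteq> j \<longrightarrow> set (ps ! i) \<inter> set (ps ! j) = {hd cs}) \<and>
     V = set cs \<union> \<Union> (set ` set ps) \<and>
     E = cycle_edges cs \<union> \<Union> (path_edges ` set ps))"

definition U_n_Delta_V :: "nat \<Rightarrow> nat \<Rightarrow> nat set" where
  "U_n_Delta_V n \<Delta> = {0..<n}"

definition U_n_Delta_E :: "nat \<Rightarrow> nat \<Rightarrow> nat set set" where
  "U_n_Delta_E n \<Delta> = (let p = 2 * \<Delta> - n - 1; q = n - \<Delta> - 1 in
     {{0, 1}, {1, 2}, {0, 2}} \<union>
     {{0, 3 + i} | i. i < p} \<union>
     {{0, 3 + p + 2 * j} | j. j < q} \<union>
     {{3 + p + 2 * j, 4 + p + 2 * j} | j. j < q})"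

end

theory Submission
  imports Defs
begin

definition nbrs :: "'a set set \<Rightarrow> 'a \<Rightarrow> 'a set" where
  "nbrs E v = {u. {v, u} \<in> E}"

lemma adj_rel_iff[simp]: "(a, b) \<in> adj_rel E \<longleftrightarrow> {a, b} \<in> E"
  by (simp add: adj_rel_def)

lemma sg_edge: "simple_graph V E \<Longrightarrow> e \<in> E \<Longrightarrow> \<exists>u v. e = {u, v} \<and> u \<noteq> v \<and> u \<in> V \<and> v \<in> V"
  by (auto simp: simple_graph_def)

lemma sg_finV: "simple_graph V E \<Longrightarrow> finite V"
  by (simp add: simple_graph_def)

lemma sg_sub: "simple_graph V E \<Longrightarrow> E \<subseteq> Pow V"
  by (auto simp: simple_graph_def)

lemma sg_finE: "simple_graph V E \<Longrightarrow> finite E"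
  using sg_sub sg_finV by (metis finite_Pow_iff finite_subset)

lemma sg_edge_V: "simple_graph V E \<Longrightarrow> {a, b} \<in> E \<Longrightarrow> a \<in> V \<and> b \<in> V"
  using sg_sub by blast

lemma sg_edge_ne: "simple_graph V E \<Longrightarrow> {a, b} \<in> E \<Longrightarrow> a \<noteq> b"
  by (auto simp: simple_graph_def doubleton_eq_iff)

lemma sg_card_edge: "simple_graph V E \<Longrightarrow> e \<in> E \<Longrightarrow> card e = 2"
  using sg_edge by fastforce

lemma nbrs_sub: assumes "simple_graph V E" shows "nbrs E v \<subseteq> V"
  using sg_edge_V[OF assms] by (auto simp: nbrs_def)

lemma nbrs_fin: "simple_graph V E \<Longrightarrow> finite (nbrs E v)"
  using nbrs_sub sg_finV finite_subset by metis

lemma degree_nbrs: assumes "simple_graph V E" shows "degree E v = card (nbrs E v)"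
proof -
  have "bij_betw (\<lambda>u. {v, u}) (nbrs E v) {e \<in> E. v \<in> e}"
  proof (rule bij_betwI')
    show "\<And>x y. x \<in> nbrs E v \<Longrightarrow> y \<in> nbrs E v \<Longrightarrow> ({v, x} = {v, y}) = (x = y)"
      by (auto simp: doubleton_eq_iff)
    show "\<And>x. x \<in> nbrs E v \<Longrightarrow> {v, x} \<in> {e \<in> E. v \<in> e}" by (auto simp: nbrs_def)
    fix e assume "e \<in> {e \<in> E. v \<in> e}"
    then obtain a b where "e = {a,b}" "e \<in> E" "v \<in> e" using sg_edge[OF assms] by blast
    then show "\<exists>x\<in>nbrs E v. e = {v, x}" by (auto simp: nbrs_def insert_commute)
  qed
  then show ?thesis unfolding degree_def by (simp add: bij_betw_same_card)
qed

lemma nbrs_iff[simp]: "u \<in> nbrs E v \<longleftrightarrow> {v, u} \<in> E" by (simp add: nbrs_def)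

lemma degree_sum: "finite E \<Longrightarrow> degree E v = (\<Sum>e\<in>E. if v \<in> e then 1 else 0)"
proof -
  assume fE: "finite E"
  have "{e \<in> E. v \<in> e} = E \<inter> {e. v \<in> e}" by auto
  then show ?thesis unfolding degree_def using fE by (simp add: sum.If_cases)
qed

lemma handshake_gen:
  assumes "simple_graph V E" "finite C"
  shows "(\<Sum>v\<in>C. degree E v) = (\<Sum>e\<in>E. card (e \<inter> C))"
proof -
  have fE: "finite E" using sg_finE[OF assms(1)] .
  have "(\<Sum>v\<in>C. degree E v) = (\<Sum>v\<in>C. \<Sum>e\<in>E. if v \<in> e then 1 else 0)"
    using degree_sum[OF fE] by simp
  also have "\<dots> = (\<Sum>e\<in>E. \<Sum>v\<in>C. if v \<in> e then 1 else 0)" by (rule sum.swap)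
  also have "\<dots> = (\<Sum>e\<in>E. card (e \<inter> C))"
  proof (rule sum.cong)
    fix e assume "e \<in> E"
    have eq: "C \<inter> {v. v \<in> e} = e \<inter> C" by auto
    have "(\<Sum>v\<in>C. if v \<in> e then 1 else 0) = card (C \<inter> {v. v \<in> e})"
      using assms(2) by (simp add: sum.If_cases)
    then show "(\<Sum>v\<in>C. if v \<in> e then 1 else 0) = card (e \<inter> C)" using eq by simp
  qed simp
  finally show ?thesis .
qed
lemma handshake:
  assumes "simple_graph V E"
  shows "(\<Sum>v\<in>V. degree E v) = 2 * card E"
proof -
  have "(\<Sum>v\<in>V. degree E v) = (\<Sum>e\<in>E. card (e \<inter> V))"
    using handshake_gen[OF assms sg_finV[OF assms]] .
  also have "\<dots> = (\<Sum>e\<in>E. 2)"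
  proof (rule sum.cong)
    fix e assume "e \<in> E"
    then have "e \<subseteq> V" "card e = 2" using sg_sub[OF assms] sg_card_edge[OF assms] by auto
    then show "card (e \<inter> V) = 2" by (simp add: Int_absorb2)
  qed simp
  finally show ?thesis by simp
qed

lemma rtrancl_closed:
  assumes "(x, y) \<in> R\<^sup>*" "x \<in> C" "\<And>a b. (a, b) \<in> R \<Longrightarrow> a \<in> C \<Longrightarrow> b \<in> C"
  shows "y \<in> C"
  using assms(1,2) by (induction rule: rtrancl_induct) (auto intro: assms(3))

lemma conn_degree_pos:
  assumes "simple_graph V E" "connected_graph V E" "v \<in> V" "card V \<ge> 2"
  shows "degree E v \<ge> 1"
proof -
  have "V \<noteq> {v}" using assms(4) by auto
  then obtain u where u: "u \<in> V" "u \<noteq> v" using assms(3) by blast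
  then have "(v, u) \<in> (adj_rel E)\<^sup>*" using assms(2,3) by (auto simp: connected_graph_def)
  then obtain w where "(v, w) \<in> adj_rel E" using u(2) converse_rtranclE by metis
  then have "w \<in> nbrs E v" by simp
  then have "card (nbrs E v) > 0" using nbrs_fin[OF assms(1)] card_gt_0_iff by blast
  then show ?thesis using degree_nbrs[OF assms(1)] by simp
qed

lemma degree1_nbr:
  assumes "simple_graph V E" "degree E x = 1"
  obtains y where "nbrs E x = {y}"
proof -
  have "card (nbrs E x) = 1" using assms degree_nbrs[OF assms(1)] by simp
  then obtain y where "nbrs E x = {y}" by (auto simp: card_1_singleton_iff)
  then show ?thesis using that by blast
qed

lemma degree1_nbr_eq:
  assumes "simple_graph V E" "degree E x = 1" "{x, y} \<in> E"
  shows "nbrs E x = {y}"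
proof -
  obtain z where z: "nbrs E x = {z}" using degree1_nbr[OF assms(1,2)] by blast
  have "y \<in> nbrs E x" using assms(3) by simp
  then show ?thesis using z by auto
qed

lemma leaf_leaf:
  assumes "simple_graph V E" "connected_graph V E" "{u, w} \<in> E" "degree E u = 1" "degree E w = 1"
  shows "V = {u, w}"
proof -
  have nu: "nbrs E u = {w}" using degree1_nbr_eq[OF assms(1,4,3)] .
  have "{w, u} \<in> E" using assms(3) by (simp add: insert_commute)
  then have nw: "nbrs E w = {u}" using degree1_nbr_eq[OF assms(1,5)] by blast
  have uV: "u \<in> V" using sg_edge_V[OF assms(1,3)] by simp
  have cl: "\<And>a b. (a, b) \<in> adj_rel E \<Longrightarrow> a \<in> {u, w} \<Longrightarrow> b \<in> {u, w}"
  proof -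
    fix a b assume "(a, b) \<in> adj_rel E" "a \<in> {u, w}"
    then have "b \<in> nbrs E a" by simp
    then show "b \<in> {u, w}" using nu nw \<open>a \<in> {u,w}\<close> by auto
  qed
  have "\<And>y. y \<in> V \<Longrightarrow> y \<in> {u, w}"
  proof -
    fix y assume "y \<in> V"
    then have "(u, y) \<in> (adj_rel E)\<^sup>*" using assms(2) uV by (auto simp: connected_graph_def)
    then show "y \<in> {u, w}" by (rule rtrancl_closed[OF _ _ cl]) simp
  qed
  moreover have "u \<in> V" "w \<in> V" using sg_edge_V[OF assms(1,3)] by auto
  ultimately show ?thesis by blast
qed


lemma degree_remove:
  assumes "finite E" "e \<in> E"
  shows "degree (E - {e}) v = (if v \<in> e then degree E v - 1 else degree E v)"
proof -
  have "{e' \<in> E - {e}. v \<in> e'} = {e' \<in> E. v \<in> e'} - {e}" by auto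
  moreover have "finite {e' \<in> E. v \<in> e'}" using assms(1) by simp
  ultimately show ?thesis unfolding degree_def using assms(2) by auto
qed

lemma degree_remove_le: "finite E \<Longrightarrow> degree (E - X) v \<le> degree E v"
  unfolding degree_def by (rule card_mono) auto

lemma sg_subE: "simple_graph V E \<Longrightarrow> E' \<subseteq> E \<Longrightarrow> simple_graph V E'"
  by (auto simp: simple_graph_def)

lemma adj_sym: "(x, y) \<in> (adj_rel E)\<^sup>* \<Longrightarrow> (y, x) \<in> (adj_rel E)\<^sup>*"
proof (induction rule: rtrancl_induct)
  case base then show ?case by simp
next
  case (step v y)
  then have "(y, v) \<in> adj_rel E" by (simp add: insert_commute)
  then show ?case using step.IH by (rule converse_rtrancl_into_rtrancl)
qed

lemma crossing:
  assumes "(s, t) \<in> R\<^sup>*" "s \<in> S" "t \<notin> S"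
  shows "\<exists>x y. (x, y) \<in> R \<and> x \<in> S \<and> y \<notin> S"
  using assms by (induction rule: rtrancl_induct) auto

lemma sub_edges:
  assumes "simple_graph V E" "connected_graph V E" "S \<subseteq> V" "S \<noteq> {}"
  shows "card {e \<in> E. e \<subseteq> S} + card (V - S) \<le> card E"
  using assms(3,4)
proof (induction "card (V - S)" arbitrary: S rule: less_induct)
  case less
  have fV: "finite V" using sg_finV[OF assms(1)] .
  have fE: "finite E" using sg_finE[OF assms(1)] .
  show ?case
  proof (cases "V - S = {}")
    case True
    have "card {e \<in> E. e \<subseteq> S} \<le> card E" by (rule card_mono[OF fE]) auto
    moreover have "card (V - S) = 0" using True by (simp only: card.empty)
    ultimately show ?thesis by linarith
  next
    case False
    then obtain t where t: "t \<in> V" "t \<notin> S" by blast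
    obtain s where s: "s \<in> S" using less.prems by blast
    then have "(s, t) \<in> (adj_rel E)\<^sup>*" using assms(2) t less.prems(1) by (auto simp: connected_graph_def)
    then obtain x y where xy: "(x, y) \<in> adj_rel E" "x \<in> S" "y \<notin> S" using crossing[OF _ s t(2)] by blast
    have xyE: "{x, y} \<in> E" using xy(1) by simp
    have yV: "y \<in> V" using sg_edge_V[OF assms(1) xyE] by simp
    let ?S = "insert y S"
    have lt: "card (V - ?S) < card (V - S)"
    proof (rule psubset_card_mono)
      show "finite (V - S)" using fV by simp
      show "V - ?S \<subset> V - S" using yV xy(3) by blast
    qed
    have IH: "card {e \<in> E. e \<subseteq> ?S} + card (V - ?S) \<le> card E"
      by (rule less.hyps[OF lt]) (use less.prems yV in auto)
    have sub: "insert {x, y} {e \<in> E. e \<subseteq> S} \<subseteq> {e \<in> E. e \<subseteq> ?S}" using xyE xy(2) by auto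
    have nin: "{x, y} \<notin> {e \<in> E. e \<subseteq> S}" using xy(3) by blast
    have fin1: "finite {e \<in> E. e \<subseteq> S}" using fE by simp
    have c1: "card (insert {x, y} {e \<in> E. e \<subseteq> S}) = Suc (card {e \<in> E. e \<subseteq> S})"
      using card_insert_disjoint[OF fin1 nin] .
    have c2: "card (insert {x, y} {e \<in> E. e \<subseteq> S}) \<le> card {e \<in> E. e \<subseteq> ?S}"
      by (rule card_mono) (use fE sub in auto)
    have eqV: "V - S = insert y (V - ?S)" using yV xy(3) by auto
    have nin2: "y \<notin> V - ?S" by blast
    have fin2: "finite (V - ?S)" using fV by simp
    have c3: "card (V - S) = Suc (card (V - ?S))"
      unfolding eqV using card_insert_disjoint[OF fin2 nin2] .
    show ?thesis using IH c1 c2 c3 by linarith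
  qed
qed

lemma sub_edges_uni:
  assumes "simple_graph V E" "unicyclic V E" "S \<subseteq> V" "S \<noteq> {}"
  shows "card {e \<in> E. e \<subseteq> S} \<le> card S"
proof -
  have "card {e \<in> E. e \<subseteq> S} + card (V - S) \<le> card E"
    using sub_edges assms unfolding unicyclic_def by blast
  moreover have "card (V - S) = card V - card S"
    using assms(3) sg_finV[OF assms(1)] by (simp add: card_Diff_subset finite_subset)
  moreover have "card S \<le> card V"
    using assms(3) sg_finV[OF assms(1)] by (simp add: card_mono)
  ultimately show ?thesis using assms(2) unfolding unicyclic_def by linarith
qed

lemma sg_remove_leaf:
  assumes "simple_graph V E" "nbrs E x = {y}"
  shows "simple_graph (V - {x}) (E - {{x, y}})"
  unfolding simple_graph_def
proof (intro conjI ballI)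
  show "finite (V - {x})" using sg_finV[OF assms(1)] by simp
  fix e assume e: "e \<in> E - {{x, y}}"
  then obtain a b where ab: "e = {a, b}" "a \<noteq> b" "a \<in> V" "b \<in> V" using sg_edge[OF assms(1)] by blast
  have ne: "e \<noteq> {x, y}" "e \<in> E" using e by auto
  have "a \<noteq> x"
  proof
    assume ax: "a = x"
    then have "{x, b} \<in> E" using ne ab by simp
    then have "b \<in> nbrs E x" by simp
    then have "b = y" using assms(2) by simp
    then show False using ne ab ax by simp
  qed
  moreover have "b \<noteq> x"
  proof
    assume bx: "b = x"
    then have "{x, a} \<in> E" using ne ab by (simp add: insert_commute)
    then have "a \<in> nbrs E x" by simp
    then have "a = y" using assms(2) by simp
    then show False using ne ab bx by (simp add: insert_commute)
  qed
  ultimately show "\<exists>u v. e = {u, v} \<and> u \<noteq> v \<and> u \<in> V - {x} \<and> v \<in> V - {x}"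
    using ab by blast
qed

lemma leaf_remove_conn:
  assumes "simple_graph V E" "connected_graph V E" "x \<in> V" "nbrs E x = {y}" "V \<noteq> {x}"
  shows "connected_graph (V - {x}) (E - {{x, y}})"
proof -
  let ?R = "adj_rel E" and ?R' = "adj_rel (E - {{x, y}})"
  have yx: "y \<noteq> x" using assms(4) sg_edge_ne[OF assms(1)] by (metis insertI1 nbrs_iff)
  have key: "(u, w) \<in> ?R\<^sup>* \<Longrightarrow> u \<noteq> x \<Longrightarrow> (u, if w = x then y else w) \<in> ?R'\<^sup>*" for u w
  proof (induction rule: rtrancl_induct)
    case base then show ?case by simp
  next
    case (step v w)
    have vw: "{v, w} \<in> E" using step.hyps(2) by simp
    show ?case
    proof (cases "w = x")
      case True
      then have "v \<in> nbrs E x" using vw by (simp add: insert_commute)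
      then have "v = y" using assms(4) by simp
      then show ?thesis using step True yx by simp
    next
      case False
      show ?thesis
      proof (cases "v = x")
        case True
        then have "w \<in> nbrs E x" using vw by simp
        then have "w = y" using assms(4) by simp
        then show ?thesis using step True False by simp
      next
        case vx: False
        have "{v, w} \<noteq> {x, y}" using vx False by (auto simp: doubleton_eq_iff)
        then have "(v, w) \<in> ?R'" using vw by simp
        then show ?thesis using step vx False by (simp add: rtrancl_into_rtrancl)
      qed
    qed
  qed
  show ?thesis unfolding connected_graph_def
  proof (intro conjI ballI)
    show "V - {x} \<noteq> {}" using assms(3,5) by blast
    fix u w assume "u \<in> V - {x}" "w \<in> V - {x}"
    then have "(u, w) \<in> ?R\<^sup>*" "u \<noteq> x" "w \<noteq> x" using assms(2) by (auto simp: connected_graph_def)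
    then show "(u, w) \<in> ?R'\<^sup>*" using key by fastforce
  qed
qed

lemma cycle_edge_remove_conn:
  assumes "simple_graph V E" "connected_graph V E" "\<forall>v\<in>V. degree E v = 2" "{v0, a} \<in> E"
  shows "connected_graph V (E - {{v0, a}})"
proof -
  let ?E' = "E - {{v0, a}}"
  let ?R = "adj_rel E" and ?R' = "adj_rel ?E'"
  have fE: "finite E" using sg_finE[OF assms(1)] .
  have fV: "finite V" using sg_finV[OF assms(1)] .
  have v0V: "v0 \<in> V" and aV: "a \<in> V" using sg_edge_V[OF assms(1,4)] by auto
  have av0: "a \<noteq> v0" using sg_edge_ne[OF assms(1,4)] by simp
  have sg': "simple_graph V ?E'" using sg_subE[OF assms(1)] by blast
  have reach: "(v0, a) \<in> ?R'\<^sup>*"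
  proof (rule ccontr)
    assume na: "(v0, a) \<notin> ?R'\<^sup>*"
    define C where "C = {w. (v0, w) \<in> ?R'\<^sup>*}"
    have clo: "p \<in> C \<Longrightarrow> {p, q} \<in> ?E' \<Longrightarrow> q \<in> C" for p q
    proof -
      assume "p \<in> C" "{p, q} \<in> ?E'"
      then have "(v0, p) \<in> ?R'\<^sup>*" "(p, q) \<in> ?R'" by (simp add: C_def, simp only: adj_rel_iff)
      then have "(v0, q) \<in> ?R'\<^sup>*" by (rule rtrancl_into_rtrancl)
      then show "q \<in> C" by (simp add: C_def)
    qed
    have CV: "C \<subseteq> V"
    proof
      fix w assume "w \<in> C"
      then have "(v0, w) \<in> ?R'\<^sup>*" by (simp add: C_def)
      then show "w \<in> V"
      proof (rule rtrancl_closed)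
        show "v0 \<in> V" using v0V .
        fix p q assume "(p, q) \<in> ?R'" "p \<in> V"
        then have "{p, q} \<in> ?E'" by (simp only: adj_rel_iff)
        then show "q \<in> V" using sg_edge_V[OF sg'] by blast
      qed
    qed
    have fC: "finite C" using CV fV finite_subset by blast
    have v0C: "v0 \<in> C" by (simp add: C_def)
    have aC: "a \<notin> C" using na by (simp add: C_def)
    have "even (\<Sum>e\<in>?E'. card (e \<inter> C))"
    proof (rule dvd_sum)
      fix e assume e: "e \<in> ?E'"
      then obtain p q where pq: "e = {p, q}" "p \<noteq> q" using sg_edge[OF sg'] by blast
      have e1: "{p, q} \<in> ?E'" using e pq by simp
      have e2: "{q, p} \<in> ?E'" using e pq by (simp add: insert_commute)
      have "(p \<in> C) = (q \<in> C)" using clo[OF _ e1] clo[OF _ e2] by blast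
      then have "card (e \<inter> C) = 0 \<or> card (e \<inter> C) = 2" using pq by (cases "p \<in> C") auto
      then show "2 dvd card (e \<inter> C)" by auto
    qed
    then have ev: "even (\<Sum>w\<in>C. degree ?E' w)" using handshake_gen[OF sg' fC] by simp
    have d0: "degree ?E' v0 = 1" using degree_remove[OF fE assms(4)] assms(3) v0V by simp
    have d2: "w \<in> C - {v0} \<Longrightarrow> degree ?E' w = 2" for w
    proof -
      assume w: "w \<in> C - {v0}"
      then have "w \<notin> {v0, a}" using aC by auto
      moreover have "degree E w = 2" using assms(3) CV w by auto
      ultimately show ?thesis using degree_remove[OF fE assms(4), of w] by simp
    qed
    have "(\<Sum>w\<in>C. degree ?E' w) = degree ?E' v0 + (\<Sum>w\<in>C - {v0}. degree ?E' w)"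
      using fC v0C by (simp add: sum.remove)
    also have "\<dots> = 1 + 2 * card (C - {v0})" using d0 d2 by simp
    finally show False using ev by simp
  qed
  have sub: "?R \<subseteq> ?R'\<^sup>*"
  proof
    fix z assume "z \<in> ?R"
    then obtain p q where z: "z = (p, q)" "{p, q} \<in> E" by (auto simp: adj_rel_def)
    show "z \<in> ?R'\<^sup>*"
    proof (cases "{p, q} = {v0, a}")
      case True
      then have "(p = v0 \<and> q = a) \<or> (p = a \<and> q = v0)" by (auto simp: doubleton_eq_iff)
      then show ?thesis
      proof
        assume "p = v0 \<and> q = a" then show ?thesis using reach z by simp
      next
        assume "p = a \<and> q = v0" then show ?thesis using adj_sym[OF reach] z by simp
      qed
    next
      case False
      then have "{p, q} \<in> ?E'" using z by simp
      then have "(p, q) \<in> ?R'" by (simp only: adj_rel_iff)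
      then show ?thesis using z by (simp add: r_into_rtrancl)
    qed
  qed
  show ?thesis unfolding connected_graph_def
  proof (intro conjI ballI)
    show "V \<noteq> {}" using v0V by blast
    fix u w assume "u \<in> V" "w \<in> V"
    then have "(u, w) \<in> ?R\<^sup>*" using assms(2) by (auto simp: connected_graph_def)
    then show "(u, w) \<in> ?R'\<^sup>*" using rtrancl_subset_rtrancl[OF sub] by blast
  qed
qed


definition sA :: "nat \<Rightarrow> real" where "sA D = sqrt (real D ^ 2 + 4) - sqrt 8"
definition sb :: real where "sb = sqrt 8 - sqrt 5"
definition sdel :: "nat \<Rightarrow> real" where "sdel D = sqrt (real D ^ 2 + 1) - sqrt (real D ^ 2 + 4) + sb"
definition hfun :: "nat \<Rightarrow> real" where "hfun x = (if x = 1 then - sb else if x = 2 then 0 else sb)"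

lemma sum_sqrt_ge:
  fixes a b c :: real
  assumes "a \<ge> 0" "b \<ge> 0" "c \<ge> 0" "a\<^sup>2 + b\<^sup>2 + 2 * sqrt (a\<^sup>2 * b\<^sup>2) \<ge> c\<^sup>2"
  shows "a + b \<ge> c"
proof -
  have "sqrt (a\<^sup>2 * b\<^sup>2) = a * b" using assms(1,2) by (simp add: real_sqrt_mult)
  then have "(a + b)\<^sup>2 \<ge> c\<^sup>2" using assms(4) by (simp add: power2_sum)
  then show ?thesis using assms(1,2,3) by (meson add_nonneg_nonneg power2_le_imp_le)
qed

lemma sb_pos: "sb > 0"
  unfolding sb_def by simp

lemma num1: "sqrt 13 + sqrt 5 \<ge> 2 * sqrt 8"
proof -
  have "sqrt 65 \<ge> 7" by (rule real_le_rsqrt) simp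
  have "(sqrt 13 + sqrt 5)\<^sup>2 = 18 + 2 * sqrt 65"
    by (simp add: power2_sum real_sqrt_mult[symmetric])
  also have "\<dots> \<ge> (2 * sqrt 8)\<^sup>2" using \<open>sqrt 65 \<ge> 7\<close> by (simp add: power_mult_distrib)
  finally have "(2 * sqrt 8)\<^sup>2 \<le> (sqrt 13 + sqrt 5)\<^sup>2" .
  then show ?thesis by (rule power2_le_imp_le) simp
qed

lemma num2: "sqrt 18 + 2 * sqrt 5 \<ge> 3 * sqrt 8"
proof -
  have "sqrt 360 \<ge> 17" by (rule real_le_rsqrt) simp
  have e: "sqrt 18 * sqrt 5 = sqrt 90" by (simp add: real_sqrt_mult[symmetric])
  have "sqrt 90 * 2 = sqrt 360"
  proof -
    have s4: "sqrt (4::real) = 2" by (rule real_sqrt_unique) simp_all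
    have "sqrt (4::real) * sqrt 90 = sqrt (4 * 90)" by (rule real_sqrt_mult[symmetric])
    then show ?thesis using s4 by simp
  qed
  have "(sqrt 18 + 2 * sqrt 5)\<^sup>2 = 38 + 4 * (sqrt 18 * sqrt 5)"
    by (simp add: power2_sum power_mult_distrib algebra_simps)
  also have "\<dots> = 38 + 2 * sqrt 360" using e \<open>sqrt 90 * 2 = sqrt 360\<close> by simp
  also have "\<dots> \<ge> (3 * sqrt 8)\<^sup>2" using \<open>sqrt 360 \<ge> 17\<close> by (simp add: power_mult_distrib)
  finally have "(3 * sqrt 8)\<^sup>2 \<le> (sqrt 18 + 2 * sqrt 5)\<^sup>2" .
  then show ?thesis by (rule power2_le_imp_le) simp
qed

lemma sdel_pos:
  assumes "D \<ge> 3" shows "sdel D > 0"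
proof -
  define t where "t = real D ^ 2"
  have t9: "t \<ge> 9"
  proof -
    have "real D \<ge> 3" using assms by simp
    then have "real D ^ 2 \<ge> 3 ^ 2" by (rule power_mono) simp
    then show ?thesis by (simp add: t_def)
  qed
  have m: "sqrt ((t + 4) * 5) < sqrt ((t + 1) * 8)" using t9 by simp
  have m1: "sqrt (t + 4) * sqrt 5 = sqrt ((t + 4) * 5)" by (rule real_sqrt_mult[symmetric])
  have m2: "sqrt (t + 1) * sqrt 8 = sqrt ((t + 1) * 8)" by (rule real_sqrt_mult[symmetric])
  have p1: "(sqrt (t + 4))\<^sup>2 = t + 4" using t9 by simp
  have p2: "(sqrt (t + 1))\<^sup>2 = t + 1" using t9 by simp
  have p3: "(sqrt 5)\<^sup>2 = (5::real)" by simp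
  have p4: "(sqrt 8)\<^sup>2 = (8::real)" by simp
  have l: "(sqrt (t + 4) + sqrt 5)\<^sup>2 = t + 9 + 2 * sqrt ((t + 4) * 5)"
    unfolding power2_sum p1 p3 m1[symmetric] by simp
  have r: "(sqrt (t + 1) + sqrt 8)\<^sup>2 = t + 9 + 2 * sqrt ((t + 1) * 8)"
    unfolding power2_sum p2 p4 m2[symmetric] by simp
  have "(sqrt (t + 4) + sqrt 5)\<^sup>2 < (sqrt (t + 1) + sqrt 8)\<^sup>2" unfolding l r using m by simp
  then have "sqrt (t + 4) + sqrt 5 < sqrt (t + 1) + sqrt 8"
    by (rule power_less_imp_less_base) (use t9 in simp)
  then show ?thesis unfolding sdel_def sb_def t_def[symmetric] by simp
qed

lemma sqrt_mono_nat:
  assumes "(a::nat) \<le> b" shows "sqrt (c + real a ^ 2) \<le> sqrt (c + real b ^ 2)"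
proof -
  have "real a ^ 2 \<le> real b ^ 2" using assms by (simp add: power_mono)
  then show ?thesis by simp
qed

lemma R_nonv0:
  fixes x y :: nat
  assumes "x \<ge> 1" "y \<ge> 1" "\<not> (x = 1 \<and> y = 1)"
  shows "sqrt (real x ^ 2 + real y ^ 2) - sqrt 8 \<ge> hfun x + hfun y"
    and "x \<le> 2 \<Longrightarrow> y \<le> 2 \<Longrightarrow> sqrt (real x ^ 2 + real y ^ 2) - sqrt 8 = hfun x + hfun y"
proof -
  have b: "sb = sqrt 8 - sqrt 5" by (simp add: sb_def)
  have n1: "sqrt 13 + sqrt 5 \<ge> 2 * sqrt 8" by (rule num1)
  have n2: "sqrt 18 + 2 * sqrt 5 \<ge> 3 * sqrt 8" by (rule num2)
  have s8: "sqrt 8 \<le> sqrt 10" by simp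
  have cases: "x = 1 \<or> x = 2 \<or> x \<ge> 3" "y = 1 \<or> y = 2 \<or> y \<ge> 3" using assms by auto
  have g3: "z \<ge> 3 \<Longrightarrow> sqrt (c + real z ^ 2) \<ge> sqrt (c + 9)" for z :: nat and c
    using sqrt_mono_nat[of 3 z c] by simp
  have g3': "z \<ge> 3 \<Longrightarrow> sqrt (real z ^ 2 + c) \<ge> sqrt (c + 9)" for z :: nat and c
    using g3[of z c] by (simp add: add.commute)
  have h3: "z \<ge> 3 \<Longrightarrow> hfun z = sb" for z by (simp add: hfun_def)
  show "sqrt (real x ^ 2 + real y ^ 2) - sqrt 8 \<ge> hfun x + hfun y"
  proof -
    consider "x = 1" "y = 2" | "x = 2" "y = 1" | "x = 2" "y = 2" | "x = 1" "y \<ge> 3" | "x \<ge> 3" "y = 1"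
      | "x = 2" "y \<ge> 3" | "x \<ge> 3" "y = 2" | "x \<ge> 3" "y \<ge> 3" using cases assms(3) by linarith
    then show ?thesis
    proof cases
      case 1 then show ?thesis by (simp add: hfun_def b)
    next
      case 2 then show ?thesis by (simp add: hfun_def b)
    next
      case 3 then show ?thesis by (simp add: hfun_def)
    next
      case 4
      have "sqrt (1 + real y ^ 2) \<ge> sqrt (1 + 9)" using g3[of y 1] 4 by simp
      then show ?thesis using s8 h3[of y] 4 by (simp add: hfun_def)
    next
      case 5
      have "sqrt (real x ^ 2 + 1) \<ge> sqrt (1 + 9)" using g3'[of x 1] 5 by simp
      then show ?thesis using s8 h3[of x] 5 by (simp add: hfun_def)
    next
      case 6
      have "sqrt (4 + real y ^ 2) \<ge> sqrt (4 + 9)" using g3[of y 4] 6 by simp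
      then have a: "sqrt (4 + real y ^ 2) \<ge> sqrt 13" by simp
      have e: "sqrt (real x ^ 2 + real y ^ 2) = sqrt (4 + real y ^ 2)" using 6 by simp
      have hx: "hfun x = 0" using 6 by (simp add: hfun_def)
      show ?thesis using a e hx n1 h3[of y] 6 b by linarith
    next
      case 7
      have "sqrt (real x ^ 2 + 4) \<ge> sqrt (4 + 9)" using g3'[of x 4] 7 by simp
      then have a: "sqrt (real x ^ 2 + 4) \<ge> sqrt 13" by simp
      have e: "sqrt (real x ^ 2 + real y ^ 2) = sqrt (real x ^ 2 + 4)" using 7 by simp
      have hy: "hfun y = 0" using 7 by (simp add: hfun_def)
      show ?thesis using a e hy n1 h3[of x] 7 b by linarith
    next
      case 8
      have a1: "sqrt (real x ^ 2 + real y ^ 2) \<ge> sqrt (real x ^ 2 + 9)" using g3[of y "real x ^ 2"] 8 by simp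
      have "sqrt (real x ^ 2 + 9) \<ge> sqrt (9 + 9)" using g3'[of x 9] 8 by simp
      then have a2: "sqrt (real x ^ 2 + 9) \<ge> sqrt 18" by simp
      show ?thesis using a1 a2 n2 h3[of x] h3[of y] 8 b by linarith
    qed
  qed
  assume "x \<le> 2" "y \<le> 2"
  then consider "x = 1" "y = 2" | "x = 2" "y = 1" | "x = 2" "y = 2" using cases assms(3) by linarith
  then show "sqrt (real x ^ 2 + real y ^ 2) - sqrt 8 = hfun x + hfun y"
    by cases (simp_all add: hfun_def b)
qed

lemma R_v0:
  fixes D y :: nat
  assumes "D \<ge> 3" "y \<ge> 1"
  shows "sqrt (real D ^ 2 + real y ^ 2) - sqrt 8 \<ge> sA D + (if y = 1 then sdel D - sb else 0)"
    and "y \<le> 2 \<Longrightarrow> sqrt (real D ^ 2 + real y ^ 2) - sqrt 8 = sA D + (if y = 1 then sdel D - sb else 0)"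
proof -
  show "y \<le> 2 \<Longrightarrow> sqrt (real D ^ 2 + real y ^ 2) - sqrt 8 = sA D + (if y = 1 then sdel D - sb else 0)"
  proof -
    assume "y \<le> 2"
    then have "y = 1 \<or> y = 2" using assms by linarith
    then show ?thesis by (auto simp: sA_def sdel_def)
  qed
  show "sqrt (real D ^ 2 + real y ^ 2) - sqrt 8 \<ge> sA D + (if y = 1 then sdel D - sb else 0)"
  proof (cases "y \<le> 2")
    case True
    then have "y = 1 \<or> y = 2" using assms by linarith
    then show ?thesis by (auto simp: sA_def sdel_def)
  next
    case False
    then have "sqrt (real D ^ 2 + real y ^ 2) \<ge> sqrt (real D ^ 2 + real 2 ^ 2)"
      using sqrt_mono_nat[of 2 y] by simp
    then show ?thesis using False by (simp add: sA_def)
  qed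
qed


definition gam :: "'a set set \<Rightarrow> 'a \<Rightarrow> nat \<Rightarrow> 'a set \<Rightarrow> 'a \<Rightarrow> real" where
  "gam E v0 D e v = (if v = v0 then sA D
     else if degree E v = 1 then (if v0 \<in> e then sdel D - sb else - sb)
     else if degree E v = 2 then 0 else (if v0 \<in> e then 0 else sb))"

definition Kset :: "'a set \<Rightarrow> 'a set set \<Rightarrow> 'a \<Rightarrow> 'a set" where
  "Kset V E v0 = {u \<in> V. {v0, u} \<in> E \<and> degree E u = 1}"

definition Hset :: "'a set \<Rightarrow> 'a set set \<Rightarrow> 'a \<Rightarrow> 'a set" where
  "Hset V E v0 = {v \<in> V - {v0}. degree E v \<ge> 3}"

lemma sum_pair: "u \<noteq> w \<Longrightarrow> (\<Sum>v\<in>{u, w}. f v) = f u + f w"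
  by simp

lemma edge_ineq:
  assumes sg: "simple_graph V E" and cn: "connected_graph V E" and n3: "card V \<ge> 3"
    and v0V: "v0 \<in> V" and dv0: "degree E v0 = D" and D3: "D \<ge> 3" and e: "e \<in> E"
  shows "sqrt (\<Sum>v\<in>e. real (degree E v) ^ 2) - sqrt 8 \<ge> (\<Sum>v\<in>e. gam E v0 D e v)"
    and "(\<forall>v\<in>V - {v0}. degree E v \<le> 2) \<Longrightarrow>
         sqrt (\<Sum>v\<in>e. real (degree E v) ^ 2) - sqrt 8 = (\<Sum>v\<in>e. gam E v0 D e v)"
proof -
  obtain u w where uw: "e = {u, w}" "u \<noteq> w" "u \<in> V" "w \<in> V" using sg_edge[OF sg e] by blast
  have pos: "x \<in> V \<Longrightarrow> degree E x \<ge> 1" for x using conn_degree_pos[OF sg cn] n3 by simp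
  have notboth: "\<not> (degree E u = 1 \<and> degree E w = 1)"
  proof
    assume "degree E u = 1 \<and> degree E w = 1"
    then have "V = {u, w}" using leaf_leaf[OF sg cn] e uw(1) by blast
    then have "card V \<le> 2" by (simp add: card_insert_le_m1)
    then show False using n3 by simp
  qed
  have case_v0: "(\<Sum>v\<in>{a, c}. real (degree E v) ^ 2) = real D ^ 2 + real (degree E c) ^ 2
       \<and> (\<Sum>v\<in>{a, c}. gam E v0 D {a, c} v) = sA D + (if degree E c = 1 then sdel D - sb else 0)"
    if "a = v0" "c \<noteq> v0" for a c
    using that dv0 by (simp add: gam_def)
  have case_n: "(\<Sum>v\<in>{u, w}. gam E v0 D {u, w} v) = hfun (degree E u) + hfun (degree E w)"
    if "u \<noteq> v0" "w \<noteq> v0"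
    using that uw(2) by (simp add: gam_def hfun_def)
  have ssum: "(\<Sum>v\<in>{u, w}. real (degree E v) ^ 2) = real (degree E u) ^ 2 + real (degree E w) ^ 2"
    using uw(2) by simp
  show ge: "sqrt (\<Sum>v\<in>e. real (degree E v) ^ 2) - sqrt 8 \<ge> (\<Sum>v\<in>e. gam E v0 D e v)"
  proof -
    consider "u = v0" | "w = v0" | "u \<noteq> v0" "w \<noteq> v0" by blast
    then show ?thesis
    proof cases
      case 1
      then have "w \<noteq> v0" using uw(2) by simp
      then show ?thesis using case_v0[OF 1] R_v0(1)[OF D3 pos[OF uw(4)]] uw(1) by simp
    next
      case 2
      then have "u \<noteq> v0" using uw(2) by simp
      moreover have "e = {w, u}" using uw(1) by (simp add: insert_commute)
      ultimately show ?thesis using case_v0[OF 2] R_v0(1)[OF D3 pos[OF uw(3)]] by simp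
    next
      case 3
      then show ?thesis using case_n ssum R_nonv0(1)[OF pos[OF uw(3)] pos[OF uw(4)] notboth] uw(1)
        by simp
    qed
  qed
  assume low: "\<forall>v\<in>V - {v0}. degree E v \<le> 2"
  show "sqrt (\<Sum>v\<in>e. real (degree E v) ^ 2) - sqrt 8 = (\<Sum>v\<in>e. gam E v0 D e v)"
  proof -
    consider "u = v0" | "w = v0" | "u \<noteq> v0" "w \<noteq> v0" by blast
    then show ?thesis
    proof cases
      case 1
      then have "w \<noteq> v0" using uw(2) by simp
      then have "degree E w \<le> 2" using low uw(4) by simp
      then show ?thesis using case_v0[OF 1 \<open>w \<noteq> v0\<close>] R_v0(2)[OF D3 pos[OF uw(4)]] uw(1) by simp
    next
      case 2
      then have "u \<noteq> v0" using uw(2) by simp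
      then have "degree E u \<le> 2" using low uw(3) by simp
      moreover have "e = {w, u}" using uw(1) by (simp add: insert_commute)
      ultimately show ?thesis using case_v0[OF 2 \<open>u \<noteq> v0\<close>] R_v0(2)[OF D3 pos[OF uw(3)]] by simp
    next
      case 3
      then have "degree E u \<le> 2" "degree E w \<le> 2" using low uw(3,4) by auto
      then show ?thesis using case_n[OF 3] ssum R_nonv0(2)[OF pos[OF uw(3)] pos[OF uw(4)] notboth] uw(1)
        by simp
    qed
  qed
qed


definition wt :: "'a set \<Rightarrow> 'a set set \<Rightarrow> 'a \<Rightarrow> nat \<Rightarrow> 'a \<Rightarrow> real" where
  "wt V E v0 D v = sb * (real (degree E v) - 2) + (if v \<in> Kset V E v0 then sdel D else 0)
     + (if v \<in> Hset V E v0 then sb else 0)"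

lemma edges_at_leaf:
  assumes sg: "simple_graph V E" and n: "nbrs E v = {y}"
  shows "{e \<in> E. v \<in> e} = {{v, y}}"
proof
  show "{{v, y}} \<subseteq> {e \<in> E. v \<in> e}" using n by auto
  show "{e \<in> E. v \<in> e} \<subseteq> {{v, y}}"
  proof
    fix e assume e: "e \<in> {e \<in> E. v \<in> e}"
    then obtain a b where ab: "e = {a, b}" "a \<noteq> b" using sg_edge[OF sg] by blast
    have "v = a \<or> v = b" using e ab by auto
    then show "e \<in> {{v, y}}"
    proof
      assume "v = a"
      then have "b \<in> nbrs E v" using e ab by simp
      then have "b = y" using n by simp
      then show ?thesis using ab \<open>v = a\<close> by simp
    next
      assume "v = b"
      then have "a \<in> nbrs E v" using e ab by (simp add: insert_commute)
      then have "a = y" using n by simp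
      then show ?thesis using ab \<open>v = b\<close> by (simp add: insert_commute)
    qed
  qed
qed

lemma vertex_sum:
  assumes sg: "simple_graph V E" and cn: "connected_graph V E" and n3: "card V \<ge> 3"
    and v0V: "v0 \<in> V" and dv0: "degree E v0 = D" and D3: "D \<ge> 3" and vV: "v \<in> V"
  shows "v = v0 \<Longrightarrow> (\<Sum>e\<in>{e \<in> E. v \<in> e}. gam E v0 D e v) = real D * sA D"
    and "v \<noteq> v0 \<Longrightarrow> (\<Sum>e\<in>{e \<in> E. v \<in> e}. gam E v0 D e v) \<ge> wt V E v0 D v"
    and "v \<noteq> v0 \<Longrightarrow> degree E v \<le> 2 \<Longrightarrow> (\<Sum>e\<in>{e \<in> E. v \<in> e}. gam E v0 D e v) = wt V E v0 D v"
proof -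
  have fE: "finite E" using sg_finE[OF sg] .
  have pos: "degree E v \<ge> 1" using conn_degree_pos[OF sg cn vV] n3 by simp
  show "(\<Sum>e\<in>{e \<in> E. v \<in> e}. gam E v0 D e v) = real D * sA D" if "v = v0"
  proof -
    have "(\<Sum>e\<in>{e \<in> E. v \<in> e}. gam E v0 D e v) = (\<Sum>e\<in>{e \<in> E. v \<in> e}. sA D)"
      using that by (intro sum.cong) (auto simp: gam_def)
    also have "\<dots> = real (degree E v) * sA D" by (simp add: degree_def)
    finally show ?thesis using that dv0 by simp
  qed
  have main: "(\<Sum>e\<in>{e \<in> E. v \<in> e}. gam E v0 D e v) \<ge> wt V E v0 D v \<and>
     (degree E v \<le> 2 \<longrightarrow> (\<Sum>e\<in>{e \<in> E. v \<in> e}. gam E v0 D e v) = wt V E v0 D v)" if vv0: "v \<noteq> v0"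
  proof -
    consider "degree E v = 1" | "degree E v = 2" | "degree E v \<ge> 3" using pos by linarith
    then show ?thesis
    proof cases
      case 1
      obtain y where y: "nbrs E v = {y}" using degree1_nbr[OF sg 1] by blast
      have ed: "{e \<in> E. v \<in> e} = {{v, y}}" using edges_at_leaf[OF sg y] .
      have K: "(v \<in> Kset V E v0) = (y = v0)"
      proof -
        have "(v \<in> Kset V E v0) = ({v0, v} \<in> E)" using vV 1 by (simp add: Kset_def)
        also have "\<dots> = (v0 \<in> nbrs E v)" by (simp add: insert_commute)
        also have "\<dots> = (y = v0)" using y by auto
        finally show ?thesis .
      qed
      have H: "v \<notin> Hset V E v0" using 1 by (simp add: Hset_def)
      have "(\<Sum>e\<in>{e \<in> E. v \<in> e}. gam E v0 D e v) = (if y = v0 then sdel D - sb else - sb)"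
        using ed vv0 1 by (simp add: gam_def)
      moreover have "wt V E v0 D v = (if y = v0 then sdel D - sb else - sb)"
        using K H 1 by (simp add: wt_def)
      ultimately show ?thesis by simp
    next
      case 2
      have "(\<Sum>e\<in>{e \<in> E. v \<in> e}. gam E v0 D e v) = 0"
        using 2 vv0 by (simp add: gam_def)
      moreover have "wt V E v0 D v = 0" using 2 by (simp add: wt_def Kset_def Hset_def)
      ultimately show ?thesis by simp
    next
      case 3
      let ?S = "{e \<in> E. v \<in> e}"
      let ?T = "{e \<in> E. v \<in> e \<and> v0 \<notin> e}"
      have "(\<Sum>e\<in>?S. gam E v0 D e v) = (\<Sum>e\<in>?S. if v0 \<in> e then 0 else sb)"
        using 3 vv0 by (intro sum.cong) (auto simp: gam_def)
      also have "\<dots> = (\<Sum>e\<in>?T. sb)"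
      proof -
        have "(\<Sum>e\<in>?S. if v0 \<in> e then 0 else sb) = (\<Sum>e\<in>?S. if v0 \<notin> e then sb else 0)"
          by (intro sum.cong) auto
        also have "\<dots> = (\<Sum>e\<in>{e \<in> ?S. v0 \<notin> e}. sb)"
          by (rule sum.inter_filter[symmetric]) (use fE in simp)
        also have "{e \<in> ?S. v0 \<notin> e} = ?T" by auto
        finally show ?thesis .
      qed
      also have "\<dots> = real (card ?T) * sb" by simp
      finally have s: "(\<Sum>e\<in>?S. gam E v0 D e v) = real (card ?T) * sb" .
      have sub: "?S \<subseteq> insert {v, v0} ?T"
      proof
        fix e assume e: "e \<in> ?S"
        show "e \<in> insert {v, v0} ?T"
        proof (cases "v0 \<in> e")
          case True
          obtain a b where ab: "e = {a, b}" "a \<noteq> b" using sg_edge[OF sg] e by blast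
          then have "e = {v, v0}" using e True vv0 by auto
          then show ?thesis by simp
        next
          case False then show ?thesis using e by simp
        qed
      qed
      have "card ?S \<le> card (insert {v, v0} ?T)" by (rule card_mono) (use fE sub in auto)
      also have "\<dots> \<le> Suc (card ?T)" by (simp add: card_insert_le_m1 card_insert_if)
      finally have "degree E v \<le> Suc (card ?T)" by (simp add: degree_def)
      then have cT: "real (card ?T) \<ge> real (degree E v) - 1" by simp
      have K: "v \<notin> Kset V E v0" using 3 by (simp add: Kset_def)
      have H: "v \<in> Hset V E v0" using 3 vV vv0 by (simp add: Hset_def)
      have w: "wt V E v0 D v = sb * (real (degree E v) - 2) + sb" using K H by (simp add: wt_def)
      have "real (card ?T) * sb \<ge> (real (degree E v) - 1) * sb"
        using cT sb_pos by (simp add: mult_right_mono)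
      then show ?thesis using s w 3 by (simp add: algebra_simps)
    qed
  qed
  show "v \<noteq> v0 \<Longrightarrow> (\<Sum>e\<in>{e \<in> E. v \<in> e}. gam E v0 D e v) \<ge> wt V E v0 D v" using main by blast
  show "v \<noteq> v0 \<Longrightarrow> degree E v \<le> 2 \<Longrightarrow> (\<Sum>e\<in>{e \<in> E. v \<in> e}. gam E v0 D e v) = wt V E v0 D v"
    using main by blast
qed


lemma swap_sum:
  assumes sg: "simple_graph V E"
  shows "(\<Sum>e\<in>E. \<Sum>v\<in>e. F e v) = (\<Sum>v\<in>V. \<Sum>e\<in>{e \<in> E. v \<in> e}. F e v)"
proof -
  have fE: "finite E" using sg_finE[OF sg] .
  have fV: "finite V" using sg_finV[OF sg] .
  have "(\<Sum>e\<in>E. \<Sum>v\<in>e. F e v) = (\<Sum>e\<in>E. \<Sum>v\<in>V. if v \<in> e then F e v else 0)"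
  proof (rule sum.cong)
    fix e assume e: "e \<in> E"
    then have eV: "e \<subseteq> V" using sg_sub[OF sg] by auto
    have "(\<Sum>v\<in>V. if v \<in> e then F e v else 0) = (\<Sum>v\<in>{v \<in> V. v \<in> e}. F e v)"
      by (rule sum.inter_filter[symmetric]) (use fV in simp)
    also have "{v \<in> V. v \<in> e} = e" using eV by auto
    finally show "(\<Sum>v\<in>e. F e v) = (\<Sum>v\<in>V. if v \<in> e then F e v else 0)" by simp
  qed simp
  also have "\<dots> = (\<Sum>v\<in>V. \<Sum>e\<in>E. if v \<in> e then F e v else 0)" by (rule sum.swap)
  also have "\<dots> = (\<Sum>v\<in>V. \<Sum>e\<in>{e \<in> E. v \<in> e}. F e v)"
  proof (rule sum.cong)
    fix v assume "v \<in> V"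
    show "(\<Sum>e\<in>E. if v \<in> e then F e v else 0) = (\<Sum>e\<in>{e \<in> E. v \<in> e}. F e v)"
      by (rule sum.inter_filter[symmetric]) (use fE in simp)
  qed simp
  finally show ?thesis .
qed

lemma sum_indic:
  assumes "finite A" "K \<subseteq> A"
  shows "(\<Sum>v\<in>A. if v \<in> K then (c::real) else 0) = c * real (card K)"
proof -
  have "(\<Sum>v\<in>A. if v \<in> K then c else 0) = (\<Sum>v\<in>{v \<in> A. v \<in> K}. c)"
    by (rule sum.inter_filter[symmetric]) (use assms in simp)
  also have "{v \<in> A. v \<in> K} = K" using assms(2) by auto
  finally show ?thesis by simp
qed

lemma main_ineq:
  assumes sg: "simple_graph V E" and cn: "connected_graph V E" and ce: "card E = card V"
    and n3: "card V \<ge> 3" and v0V: "v0 \<in> V" and dv0: "degree E v0 = D" and D3: "D \<ge> 3"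
  shows "sombor E \<ge> real (card V) * sqrt 8 + real D * sA D + sb * (2 - real D)
            + sdel D * real (card (Kset V E v0)) + sb * real (card (Hset V E v0))"
    and "(\<forall>v\<in>V - {v0}. degree E v \<le> 2) \<Longrightarrow> sombor E = real (card V) * sqrt 8 + real D * sA D
            + sb * (2 - real D) + sdel D * real (card (Kset V E v0))"
proof -
  have fE: "finite E" using sg_finE[OF sg] .
  have fV: "finite V" using sg_finV[OF sg] .
  let ?g = "\<lambda>e. sqrt (\<Sum>v\<in>e. real (degree E v) ^ 2) - sqrt 8"
  let ?G = "\<lambda>e. \<Sum>v\<in>e. gam E v0 D e v"
  let ?vs = "\<lambda>v. \<Sum>e\<in>{e \<in> E. v \<in> e}. gam E v0 D e v"
  let ?K = "Kset V E v0" and ?H = "Hset V E v0"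
  have so: "sombor E = (\<Sum>e\<in>E. ?g e) + real (card V) * sqrt 8"
    unfolding sombor_def using ce by (simp add: sum_subtractf)
  have sw: "(\<Sum>e\<in>E. ?G e) = (\<Sum>v\<in>V. ?vs v)" using swap_sum[OF sg] .
  have split: "(\<Sum>v\<in>V. ?vs v) = ?vs v0 + (\<Sum>v\<in>V - {v0}. ?vs v)"
    using fV v0V by (simp add: sum.remove)
  have v0s: "?vs v0 = real D * sA D" using vertex_sum(1)[OF sg cn n3 v0V dv0 D3 v0V] by simp
  have hs: "(\<Sum>v\<in>V. degree E v) = 2 * card V" using handshake[OF sg] ce by simp
  have hs2: "(\<Sum>v\<in>V - {v0}. real (degree E v)) = 2 * real (card V) - real D"
  proof -
    have "(\<Sum>v\<in>V. real (degree E v)) = real (2 * card V)" using hs by (simp add: of_nat_sum[symmetric])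
    moreover have "(\<Sum>v\<in>V. real (degree E v)) = real (degree E v0) + (\<Sum>v\<in>V - {v0}. real (degree E v))"
      using fV v0V by (simp add: sum.remove)
    ultimately show ?thesis using dv0 by simp
  qed
  have Ksub: "?K \<subseteq> V - {v0}"
  proof
    fix u assume u: "u \<in> ?K"
    then have "u \<in> V" "degree E u = 1" by (auto simp: Kset_def)
    then show "u \<in> V - {v0}" using dv0 D3 by auto
  qed
  have Hsub: "?H \<subseteq> V - {v0}" by (auto simp: Hset_def)
  have cardv: "card (V - {v0}) = card V - 1" using v0V fV by simp
  have wsum: "(\<Sum>v\<in>V - {v0}. wt V E v0 D v) = sb * (2 - real D) + sdel D * real (card ?K) + sb * real (card ?H)"
  proof -
    have "(\<Sum>v\<in>V - {v0}. wt V E v0 D v) = (\<Sum>v\<in>V - {v0}. sb * (real (degree E v) - 2))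
       + (\<Sum>v\<in>V - {v0}. if v \<in> ?K then sdel D else 0) + (\<Sum>v\<in>V - {v0}. if v \<in> ?H then sb else 0)"
      unfolding wt_def by (simp add: sum.distrib)
    also have "(\<Sum>v\<in>V - {v0}. if v \<in> ?K then sdel D else 0) = sdel D * real (card ?K)"
      using sum_indic[OF _ Ksub] fV by simp
    also have "(\<Sum>v\<in>V - {v0}. if v \<in> ?H then sb else 0) = sb * real (card ?H)"
      using sum_indic[OF _ Hsub] fV by simp
    also have "(\<Sum>v\<in>V - {v0}. sb * (real (degree E v) - 2)) = sb * ((\<Sum>v\<in>V - {v0}. real (degree E v)) - 2 * real (card (V - {v0})))"
      by (simp add: sum_distrib_left[symmetric] sum_subtractf)
    also have "\<dots> = sb * (2 - real D)"
    proof -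
      have "card V \<ge> 1" using n3 by simp
      then have "real (card (V - {v0})) = real (card V) - 1" using cardv by simp
      then have "(\<Sum>v\<in>V - {v0}. real (degree E v)) - 2 * real (card (V - {v0})) = 2 - real D"
        using hs2 by linarith
      then show ?thesis by simp
    qed
    finally show ?thesis .
  qed
  have ge_e: "(\<Sum>e\<in>E. ?g e) \<ge> (\<Sum>e\<in>E. ?G e)"
    by (rule sum_mono) (rule edge_ineq(1)[OF sg cn n3 v0V dv0 D3])
  have ge_v: "(\<Sum>v\<in>V - {v0}. ?vs v) \<ge> (\<Sum>v\<in>V - {v0}. wt V E v0 D v)"
    by (rule sum_mono) (use vertex_sum(2)[OF sg cn n3 v0V dv0 D3] in auto)
  show "sombor E \<ge> real (card V) * sqrt 8 + real D * sA D + sb * (2 - real D)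
            + sdel D * real (card ?K) + sb * real (card ?H)"
    using so sw split v0s wsum ge_e ge_v by linarith
  assume low: "\<forall>v\<in>V - {v0}. degree E v \<le> 2"
  have eq_e: "(\<Sum>e\<in>E. ?g e) = (\<Sum>e\<in>E. ?G e)"
    by (rule sum.cong) (use edge_ineq(2)[OF sg cn n3 v0V dv0 D3 _ low] in auto)
  have eq_v: "(\<Sum>v\<in>V - {v0}. ?vs v) = (\<Sum>v\<in>V - {v0}. wt V E v0 D v)"
    by (rule sum.cong) (use vertex_sum(3)[OF sg cn n3 v0V dv0 D3] low in auto)
  have H0: "?H = {}"
  proof -
    have "\<And>x. x \<in> ?H \<Longrightarrow> False"
    proof -
      fix x assume "x \<in> ?H"
      then have x1: "x \<in> V - {v0}" and x2: "degree E x \<ge> 3" by (auto simp: Hset_def)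
      have "degree E x \<le> 2" using low x1 by blast
      then show False using x2 by linarith
    qed
    then show ?thesis by blast
  qed
  show "sombor E = real (card V) * sqrt 8 + real D * sA D
            + sb * (2 - real D) + sdel D * real (card ?K)"
    using so sw split v0s wsum eq_e eq_v H0 by simp
qed


lemma edge_with: 
  assumes sg: "simple_graph V E" and e: "e \<in> E" and x: "x \<in> e"
  obtains y where "e = {x, y}" "y \<noteq> x" "y \<in> nbrs E x"
proof -
  obtain a b where ab: "e = {a, b}" "a \<noteq> b" using sg_edge[OF sg e] by blast
  show ?thesis
  proof (cases "x = a")
    case True
    then show ?thesis using that ab e by auto
  next
    case False
    then have "x = b" using x ab by auto
    then have "e = {x, a}" "a \<noteq> x" using ab by auto
    then show ?thesis using that e by auto
  qed
qed

lemma v0_notin_nbrs: assumes sg: "simple_graph V E" shows "v0 \<notin> nbrs E v0"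
proof
  assume "v0 \<in> nbrs E v0"
  then have "{v0, v0} \<in> E" by simp
  then show False using sg_edge_ne[OF sg] by blast
qed

lemma edges_in_nbrs_le1:
  assumes sg: "simple_graph V E" and un: "unicyclic V E" and v0V: "v0 \<in> V"
  shows "card {e \<in> E. e \<subseteq> nbrs E v0} \<le> 1"
proof -
  let ?N = "nbrs E v0"
  let ?S = "insert v0 ?N"
  let ?E0 = "{e \<in> E. v0 \<in> e}"
  have fE: "finite E" using sg_finE[OF sg] .
  have fN: "finite ?N" using nbrs_fin[OF sg] .
  have SV: "?S \<subseteq> V" using v0V nbrs_sub[OF sg] by auto
  have v0N: "v0 \<notin> ?N" using v0_notin_nbrs[OF sg] .
  have c1: "card {e \<in> E. e \<subseteq> ?S} \<le> card ?S" using sub_edges_uni[OF sg un SV] by blast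
  have cS: "card ?S = Suc (card ?N)" using fN v0N by simp
  have dN: "card ?E0 = card ?N" using degree_nbrs[OF sg, of v0] by (simp add: degree_def)
  have sub: "?E0 \<union> {e \<in> E. e \<subseteq> ?N} \<subseteq> {e \<in> E. e \<subseteq> ?S}"
  proof
    fix e assume "e \<in> ?E0 \<union> {e \<in> E. e \<subseteq> ?N}"
    then consider "e \<in> E" "v0 \<in> e" | "e \<in> E" "e \<subseteq> ?N" by blast
    then show "e \<in> {e \<in> E. e \<subseteq> ?S}"
    proof cases
      case 1
      obtain y where "e = {v0, y}" "y \<in> ?N" using edge_with[OF sg 1] by blast
      then show ?thesis using 1 by auto
    next
      case 2 then show ?thesis by auto
    qed
  qed
  have disj: "?E0 \<inter> {e \<in> E. e \<subseteq> ?N} = {}" using v0N by auto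
  have "card (?E0 \<union> {e \<in> E. e \<subseteq> ?N}) = card ?E0 + card {e \<in> E. e \<subseteq> ?N}"
    by (rule card_Un_disjoint) (use fE disj in auto)
  moreover have "card (?E0 \<union> {e \<in> E. e \<subseteq> ?N}) \<le> card {e \<in> E. e \<subseteq> ?S}"
    by (rule card_mono) (use fE sub in auto)
  ultimately show ?thesis using c1 cS dN by linarith
qed

lemma count_K:
  assumes sg: "simple_graph V E" and un: "unicyclic V E" and v0V: "v0 \<in> V"
    and n3: "card V \<ge> 3"
  shows "card V + card (Kset V E v0) + 1 \<ge> 2 * degree E v0"
proof -
  have cn: "connected_graph V E" and ce: "card E = card V" using un by (auto simp: unicyclic_def)
  let ?N = "nbrs E v0" and ?K = "Kset V E v0"
  let ?W = "?N - ?K"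
  let ?E0 = "{e \<in> E. v0 \<in> e}"
  let ?F = "{e \<in> E. v0 \<notin> e}"
  let ?EW = "{e \<in> ?F. e \<inter> ?W \<noteq> {}}"
  have fE: "finite E" using sg_finE[OF sg] .
  have fV: "finite V" using sg_finV[OF sg] .
  have fN: "finite ?N" using nbrs_fin[OF sg] .
  have KN: "?K \<subseteq> ?N"
  proof
    fix u assume "u \<in> ?K" then show "u \<in> ?N" by (simp add: Kset_def)
  qed
  have fK: "finite ?K" using finite_subset[OF KN fN] .
  have cW: "card ?W = card ?N - card ?K" using card_Diff_subset[OF fK KN] .
  have cKN: "card ?K \<le> card ?N" using card_mono[OF fN KN] .
  have dN: "degree E v0 = card ?N" using degree_nbrs[OF sg] .
  have cE0: "card ?E0 = degree E v0" by (simp add: degree_def)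
  have sgF: "simple_graph V ?F" by (rule sg_subE[OF sg]) auto
  have fW: "finite ?W" using fN by simp
  have hg: "(\<Sum>u\<in>?W. degree ?F u) = (\<Sum>e\<in>?F. card (e \<inter> ?W))" using handshake_gen[OF sgF fW] .
  have lowu: "degree ?F u \<ge> 1" if u: "u \<in> ?W" for u
  proof -
    have uN: "{v0, u} \<in> E" using u by simp
    have uV: "u \<in> V" using sg_edge_V[OF sg uN] by simp
    have "degree E u \<ge> 1" using conn_degree_pos[OF sg cn uV] n3 by simp
    moreover have "degree E u \<noteq> 1" using u uV by (auto simp: Kset_def)
    ultimately have d2: "degree E u \<ge> 2" by simp
    have "{e \<in> E. u \<in> e} \<subseteq> insert {v0, u} {e \<in> ?F. u \<in> e}"
    proof
      fix e assume e: "e \<in> {e \<in> E. u \<in> e}"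
      show "e \<in> insert {v0, u} {e \<in> ?F. u \<in> e}"
      proof (cases "v0 \<in> e")
        case True
        obtain y where "e = {u, y}" "y \<noteq> u" using edge_with[OF sg, of e u] e by blast
        then have "e = {v0, u}" using True v0_notin_nbrs[OF sg] u by auto
        then show ?thesis by simp
      next
        case False then show ?thesis using e by simp
      qed
    qed
    then have "card {e \<in> E. u \<in> e} \<le> card (insert {v0, u} {e \<in> ?F. u \<in> e})"
      by (rule card_mono[rotated]) (use fE in simp)
    also have "\<dots> \<le> Suc (card {e \<in> ?F. u \<in> e})" using fE by (simp add: card_insert_if)
    finally have "degree E u \<le> Suc (degree ?F u)" by (simp add: degree_def)
    then show ?thesis using d2 by simp
  qed
  have "card ?W \<le> (\<Sum>u\<in>?W. degree ?F u)"
  proof -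
    have "(\<Sum>u\<in>?W. 1) \<le> (\<Sum>u\<in>?W. degree ?F u)" by (rule sum_mono) (rule lowu)
    then show ?thesis by simp
  qed
  also have "\<dots> = (\<Sum>e\<in>?F. card (e \<inter> ?W))" using hg .
  also have "(\<Sum>e\<in>?F. card (e \<inter> ?W)) \<le> (\<Sum>e\<in>?F. (if e \<inter> ?W \<noteq> {} then 1 else 0) + (if e \<subseteq> ?N then 1 else 0))"
  proof (rule sum_mono)
    fix e assume e: "e \<in> ?F"
    obtain a b where ab: "e = {a, b}" "a \<noteq> b" using sg_edge[OF sg] e by blast
    show "card (e \<inter> ?W) \<le> (if e \<inter> ?W \<noteq> {} then 1 else 0) + (if e \<subseteq> ?N then 1 else 0)"
    proof -
      have ce2: "card e = 2" using ab by simp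
      have fe: "finite e" using ab by simp
      have le2: "card (e \<inter> ?W) \<le> 2" using card_mono[OF fe, of "e \<inter> ?W"] ce2 by simp
      show ?thesis
      proof (cases "e \<inter> ?W = {}")
        case True then show ?thesis by simp
      next
        case ne: False
        show ?thesis
        proof (cases "e \<subseteq> ?N")
          case True then show ?thesis using ne le2 by simp
        next
          case False
          then have "e \<inter> ?W \<subset> e" by blast
          then have "card (e \<inter> ?W) < card e" using fe by (rule psubset_card_mono[rotated])
          then show ?thesis using ne False ce2 by simp
        qed
      qed
    qed
  qed
  also have "\<dots> = card ?EW + card {e \<in> ?F. e \<subseteq> ?N}"
  proof -
    have fF: "finite ?F" using fE by simp
    have "(\<Sum>e\<in>?F. (if e \<inter> ?W \<noteq> {} then 1 else 0) + (if e \<subseteq> ?N then 1 else 0))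
        = (\<Sum>e\<in>?F. (if e \<inter> ?W \<noteq> {} then 1 else 0)) + (\<Sum>e\<in>?F. (if e \<subseteq> ?N then 1 else 0::nat))"
      by (rule sum.distrib)
    also have "(\<Sum>e\<in>?F. (if e \<inter> ?W \<noteq> {} then 1 else 0::nat)) = card ?EW"
      using sum.inter_filter[OF fF, of "\<lambda>_. 1::nat" "\<lambda>e. e \<inter> ?W \<noteq> {}"] by simp
    also have "(\<Sum>e\<in>?F. (if e \<subseteq> ?N then 1 else 0::nat)) = card {e \<in> ?F. e \<subseteq> ?N}"
      using sum.inter_filter[OF fF, of "\<lambda>_. 1::nat" "\<lambda>e. e \<subseteq> ?N"] by simp
    finally show ?thesis .
  qed
  finally have cW2: "card ?W \<le> card ?EW + card {e \<in> ?F. e \<subseteq> ?N}" .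
  have "card {e \<in> ?F. e \<subseteq> ?N} \<le> card {e \<in> E. e \<subseteq> ?N}" by (rule card_mono) (use fE in auto)
  then have cW3: "card ?W \<le> card ?EW + 1" using cW2 edges_in_nbrs_le1[OF sg un v0V] by linarith
  have "card (?E0 \<union> ?EW) = card ?E0 + card ?EW" by (rule card_Un_disjoint) (use fE in auto)
  moreover have "card (?E0 \<union> ?EW) \<le> card E" by (rule card_mono) (use fE in auto)
  ultimately have "card ?E0 + card ?EW \<le> card V" using ce by simp
  then show ?thesis using cW3 cW cKN dN cE0 by linarith
qed


lemma path_edges_iff: "e \<in> path_edges xs \<longleftrightarrow> (\<exists>i. Suc i < length xs \<and> e = {xs ! i, xs ! Suc i})"
  by (auto simp: path_edges_def)

lemma path_edges_snoc:
  assumes "xs \<noteq> []"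
  shows "path_edges (xs @ [x]) = insert {last xs, x} (path_edges xs)"
proof (intro set_eqI iffI)
  fix e assume "e \<in> path_edges (xs @ [x])"
  then obtain i where i: "Suc i < Suc (length xs)" "e = {(xs @ [x]) ! i, (xs @ [x]) ! Suc i}"
    by (auto simp: path_edges_iff)
  show "e \<in> insert {last xs, x} (path_edges xs)"
  proof (cases "Suc i < length xs")
    case True
    then have "e = {xs ! i, xs ! Suc i}" using i by (simp add: nth_append)
    then show ?thesis using True by (auto simp: path_edges_iff)
  next
    case False
    then have "Suc i = length xs" using i by simp
    then have ii: "i = length xs - 1" by simp
    have "e = {xs ! i, x}" using i \<open>Suc i = length xs\<close> by (simp add: nth_append)
    then have "e = {last xs, x}" using ii assms by (simp add: last_conv_nth)
    then show ?thesis by simp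
  qed
next
  fix e assume "e \<in> insert {last xs, x} (path_edges xs)"
  then consider "e = {last xs, x}" | "e \<in> path_edges xs" by blast
  then show "e \<in> path_edges (xs @ [x])"
  proof cases
    case 1
    let ?i = "length xs - 1"
    have "Suc ?i < length (xs @ [x])" using assms by simp
    moreover have "(xs @ [x]) ! ?i = last xs" using assms by (simp add: nth_append last_conv_nth)
    moreover have "(xs @ [x]) ! Suc ?i = x" using assms by (simp add: nth_append)
    ultimately show ?thesis using 1 unfolding path_edges_iff by metis
  next
    case 2
    then obtain i where i: "Suc i < length xs" "e = {xs ! i, xs ! Suc i}" by (auto simp: path_edges_iff)
    then have "e = {(xs @ [x]) ! i, (xs @ [x]) ! Suc i}" by (simp add: nth_append)
    moreover have "Suc i < length (xs @ [x])" using i by simp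
    ultimately show ?thesis unfolding path_edges_iff by blast
  qed
qed

lemma path_edges_two: "path_edges [a, b] = {{a, b}}"
  by (auto simp: path_edges_iff)

lemma path_lemma:
  assumes "simple_graph V E" "connected_graph V E" "card E + 1 = card V"
    "a \<in> V" "b \<in> V" "a \<noteq> b" "degree E a \<le> 1" "degree E b \<le> 1"
    "\<forall>v\<in>V - {a, b}. degree E v \<le> 2"
  shows "\<exists>xs. distinct xs \<and> hd xs = a \<and> last xs = b \<and> set xs = V \<and> path_edges xs = E"
  using assms
proof (induction "card V" arbitrary: V E b rule: less_induct)
  case less
  have sg: "simple_graph V E" and cn: "connected_graph V E" using less.prems by auto
  have fV: "finite V" using sg_finV[OF sg] .
  have fE: "finite E" using sg_finE[OF sg] .
  have c2: "card V \<ge> 2"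
  proof -
    have "{a, b} \<subseteq> V" using less.prems by auto
    then have "card {a, b} \<le> card V" using fV by (rule card_mono[rotated])
    then show ?thesis using less.prems(6) by simp
  qed
  have db: "degree E b = 1" using conn_degree_pos[OF sg cn less.prems(5) c2] less.prems(8) by simp
  obtain y where y: "nbrs E b = {y}" using degree1_nbr[OF sg db] by blast
  have byE: "{b, y} \<in> E" using y by auto
  have yV: "y \<in> V" and yb: "y \<noteq> b" using sg_edge_V[OF sg byE] sg_edge_ne[OF sg byE] by auto
  show ?case
  proof (cases "y = a")
    case True
    have "degree E a \<ge> 1" using conn_degree_pos[OF sg cn less.prems(4) c2] .
    then have da: "degree E a = 1" using less.prems(7) by simp
    have abE: "{a, b} \<in> E" using byE True by (simp add: insert_commute)
    have V2: "V = {a, b}" using leaf_leaf[OF sg cn abE da db] .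
    have "card E = 1" using less.prems(3) V2 less.prems(6) by simp
    then obtain e where "E = {e}" by (auto simp: card_1_singleton_iff)
    then have E1: "E = {{a, b}}" using abE by simp
    show ?thesis
      by (rule exI[of _ "[a, b]"]) (use V2 E1 less.prems(6) in \<open>simp add: path_edges_two\<close>)
  next
    case False
    let ?V = "V - {b}" and ?E = "E - {{b, y}}"
    have sg': "simple_graph ?V ?E" using sg_remove_leaf[OF sg y] .
    have cn': "connected_graph ?V ?E"
      using leaf_remove_conn[OF sg cn less.prems(5) y] less.prems(4,6) by blast
    have cE': "card ?E + 1 = card ?V" using less.prems(3) byE fE fV less.prems(5) c2 by simp
    have lt: "card ?V < card V" using fV less.prems(5) c2 by simp
    have aV': "a \<in> ?V" "y \<in> ?V" using less.prems(4,6) yV yb by auto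
    have da': "degree ?E a \<le> 1" using degree_remove_le[OF fE, of "{{b,y}}" a] less.prems(7) by simp
    have dy: "degree E y \<le> 2" using less.prems(9) yV yb False by auto
    have dy': "degree ?E y \<le> 1" using degree_remove[OF fE byE, of y] dy by simp
    have oth: "\<forall>v\<in>?V - {a, y}. degree ?E v \<le> 2"
    proof
      fix v assume v: "v \<in> ?V - {a, y}"
      then have "degree E v \<le> 2" using less.prems(9) by auto
      then show "degree ?E v \<le> 2" using degree_remove_le[OF fE, of "{{b,y}}" v] by simp
    qed
    have ay: "a \<noteq> y" using False by simp
    have "\<exists>xs. distinct xs \<and> hd xs = a \<and> last xs = y \<and> set xs = ?V \<and> path_edges xs = ?E"
      by (rule less.hyps[OF lt sg' cn' cE' aV'(1) aV'(2) ay da' dy' oth])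
    then obtain xs where xs: "distinct xs" "hd xs = a" "last xs = y" "set xs = ?V" "path_edges xs = ?E"
      by blast
    have "a \<in> set xs" using xs(4) aV'(1) by simp
    then have xne: "xs \<noteq> []" by auto
    have "distinct (xs @ [b])" using xs(1,4) by simp
    moreover have "hd (xs @ [b]) = a" using xs(2) xne by simp
    moreover have "last (xs @ [b]) = b" by simp
    moreover have "set (xs @ [b]) = V" using xs(4) less.prems(5) by auto
    moreover have "path_edges (xs @ [b]) = E"
    proof -
      have "path_edges (xs @ [b]) = insert {y, b} ?E" using path_edges_snoc[OF xne] xs(3,5) by simp
      also have "\<dots> = E"
      proof -
        have "{y, b} = {b, y}" by (rule insert_commute)
        then show ?thesis using insert_Diff[OF byE] by simp
      qed
      finally show ?thesis .
    qed
    ultimately show ?thesis by blast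
  qed
qed


lemma cycle_lemma:
  assumes sg: "simple_graph V E" and cn: "connected_graph V E" and ce: "card E = card V"
    and d2: "\<forall>v\<in>V. degree E v = 2" and v0V: "v0 \<in> V"
  shows "\<exists>cs. distinct cs \<and> length cs \<ge> 3 \<and> hd cs = v0 \<and> set cs = V \<and> cycle_edges cs = E"
proof -
  have fE: "finite E" using sg_finE[OF sg] .
  have fV: "finite V" using sg_finV[OF sg] .
  have cN: "card (nbrs E v0) = 2" using d2 v0V degree_nbrs[OF sg, of v0] by simp
  then obtain a where aN: "a \<in> nbrs E v0" by (metis card.empty ex_in_conv zero_neq_numeral)
  have e: "{v0, a} \<in> E" using aN by simp
  have aV: "a \<in> V" and av0: "a \<noteq> v0" using sg_edge_V[OF sg e] sg_edge_ne[OF sg e] by auto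
  let ?E = "E - {{v0, a}}"
  have sg': "simple_graph V ?E" by (rule sg_subE[OF sg]) auto
  have cn': "connected_graph V ?E" using cycle_edge_remove_conn[OF sg cn d2 e] .
  have c3: "card V \<ge> 3"
  proof -
    have "insert v0 (nbrs E v0) \<subseteq> V" using v0V nbrs_sub[OF sg] by auto
    then have "card (insert v0 (nbrs E v0)) \<le> card V" using fV by (rule card_mono[rotated])
    moreover have "card (insert v0 (nbrs E v0)) = 3"
      using cN v0_notin_nbrs[OF sg] nbrs_fin[OF sg] by simp
    ultimately show ?thesis by simp
  qed
  have cE': "card ?E + 1 = card V" using ce e fE c3 by simp
  have dv0: "degree ?E v0 \<le> 1" using degree_remove[OF fE e, of v0] d2 v0V by simp
  have da: "degree ?E a \<le> 1" using degree_remove[OF fE e, of a] d2 aV by simp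
  have oth: "\<forall>v\<in>V - {v0, a}. degree ?E v \<le> 2"
    using degree_remove_le[OF fE] d2 by (metis DiffD1 order_refl)
  obtain xs where xs: "distinct xs" "hd xs = v0" "last xs = a" "set xs = V" "path_edges xs = ?E"
    using path_lemma[OF sg' cn' cE' v0V aV av0[symmetric] dv0 da oth] by blast
  have "length xs = card V" using xs(1,4) distinct_card by fastforce
  then have l3: "length xs \<ge> 3" using c3 by simp
  have "cycle_edges xs = insert {a, v0} ?E" unfolding cycle_edges_def using xs(2,3,5) by simp
  also have "\<dots> = E" using insert_Diff[OF e] by (simp add: insert_commute)
  finally show ?thesis using xs l3 by blast
qed

definition pstruct :: "'a set \<Rightarrow> 'a set set \<Rightarrow> 'a \<Rightarrow> 'a list \<Rightarrow> 'a list set \<Rightarrow> bool" where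
  "pstruct V E v0 cs P \<longleftrightarrow> distinct cs \<and> length cs \<ge> 3 \<and> hd cs = v0 \<and> finite P \<and>
     (\<forall>p\<in>P. distinct p \<and> length p \<ge> 2 \<and> hd p = v0 \<and> set p \<inter> set cs = {v0}) \<and>
     (\<forall>p\<in>P. \<forall>p'\<in>P. p \<noteq> p' \<longrightarrow> set p \<inter> set p' = {v0}) \<and>
     V = set cs \<union> \<Union> (set ` P) \<and> E = cycle_edges cs \<union> \<Union> (path_edges ` P)"

lemma two_nbrs:
  assumes sg: "simple_graph V E" "{v, a} \<in> E" "{v, b} \<in> E" "a \<noteq> b"
  shows "degree E v \<ge> 2"
proof -
  have "{a, b} \<subseteq> nbrs E v" using assms by simp
  then have "card {a, b} \<le> card (nbrs E v)" using nbrs_fin[OF sg(1)] by (rule card_mono[rotated])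
  then show ?thesis using assms(4) degree_nbrs[OF sg(1)] by simp
qed

lemma pe_mem: "Suc i < length xs \<Longrightarrow> {xs ! i, xs ! Suc i} \<in> path_edges xs"
  by (auto simp: path_edges_iff)

lemma hd_nth0: "xs \<noteq> [] \<Longrightarrow> hd xs = xs ! 0" by (simp add: hd_conv_nth)

lemma pstruct_lb:
  assumes ps: "pstruct V E v0 cs P" and sg: "simple_graph V E"
    and vV: "v \<in> V" and vv0: "v \<noteq> v0" and vL: "v \<notin> last ` P"
  shows "degree E v \<ge> 2"
proof -
  have cs: "distinct cs" "length cs \<ge> 3" "hd cs = v0" and VE: "V = set cs \<union> \<Union> (set ` P)"
    and EE: "E = cycle_edges cs \<union> \<Union> (path_edges ` P)"
    and pp: "\<And>p. p \<in> P \<Longrightarrow> distinct p \<and> length p \<ge> 2 \<and> hd p = v0 \<and> set p \<inter> set cs = {v0}"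
    using ps unfolding pstruct_def by auto
  have pcs: "path_edges cs \<subseteq> E" using EE by (auto simp: cycle_edges_def)
  show ?thesis
  proof (cases "v \<in> set cs")
    case True
    then obtain i where i: "i < length cs" "cs ! i = v" by (auto simp: in_set_conv_nth)
    have "cs \<noteq> []" using cs(2) by auto
    then have cs0: "cs ! 0 = v0" using cs(3) by (simp add: hd_conv_nth)
    have i0: "i \<noteq> 0"
    proof
      assume "i = 0" then show False using i cs0 vv0 by simp
    qed
    have e1: "{cs ! (i - 1), cs ! i} \<in> E" using pe_mem[of "i - 1" cs] i i0 pcs by auto
    then have e1': "{v, cs ! (i - 1)} \<in> E" using i by (simp add: insert_commute)
    show ?thesis
    proof (cases "Suc i < length cs")
      case True
      have e2: "{v, cs ! Suc i} \<in> E" using pe_mem[of i cs] True i pcs by auto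
      have "cs ! (i - 1) \<noteq> cs ! Suc i" using cs(1) True i i0 by (simp add: nth_eq_iff_index_eq)
      then show ?thesis using two_nbrs[OF sg e1' e2] by simp
    next
      case False
      then have il: "i = length cs - 1" using i by simp
      have "last cs = cs ! (length cs - 1)" using \<open>cs \<noteq> []\<close> by (rule last_conv_nth)
      then have "last cs = v" using il i by simp
      then have e2: "{v, v0} \<in> E" using EE cs(3) by (auto simp: cycle_edges_def)
      have "i - 1 \<noteq> 0" using il cs(2) by simp
      then have "cs ! (i - 1) \<noteq> cs ! 0" using nth_eq_iff_index_eq[OF cs(1), of "i - 1" 0] i \<open>cs \<noteq> []\<close> by auto
      then have "cs ! (i - 1) \<noteq> v0" using cs0 by simp
      then show ?thesis using two_nbrs[OF sg e1' e2] by simp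
    qed
  next
    case False
    then obtain p where p: "p \<in> P" "v \<in> set p" using vV VE by auto
    have pd: "distinct p" "length p \<ge> 2" "hd p = v0" using pp[OF p(1)] by auto
    have pE: "path_edges p \<subseteq> E" using EE p(1) by auto
    obtain i where i: "i < length p" "p ! i = v" using p(2) by (auto simp: in_set_conv_nth)
    have "p \<noteq> []" using pd(2) by auto
    then have p0: "p ! 0 = v0" using pd(3) by (simp add: hd_conv_nth)
    have i0: "i \<noteq> 0"
    proof
      assume "i = 0" then show False using i p0 vv0 by simp
    qed
    have "v \<noteq> last p" using vL p(1) by auto
    then have il: "Suc i < length p" using i pd by (metis Suc_lessI diff_Suc_1 last_conv_nth list.size(3) not_less0)
    have e1: "{v, p ! (i - 1)} \<in> E" using pe_mem[of "i - 1" p] i i0 pE by (auto simp: insert_commute)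
    have e2: "{v, p ! Suc i} \<in> E" using pe_mem[of i p] il i pE by auto
    have "p ! (i - 1) \<noteq> p ! Suc i" using pd(1) il i0 by (simp add: nth_eq_iff_index_eq)
    then show ?thesis using two_nbrs[OF sg e1 e2] by simp
  qed
qed


lemma pstruct_facts:
  assumes ps: "pstruct V E v0 cs P"
  shows "distinct cs" "length cs \<ge> 3" "hd cs = v0" "finite P"
    "\<And>p. p \<in> P \<Longrightarrow> distinct p" "\<And>p. p \<in> P \<Longrightarrow> length p \<ge> 2" "\<And>p. p \<in> P \<Longrightarrow> hd p = v0"
    "\<And>p. p \<in> P \<Longrightarrow> set p \<inter> set cs = {v0}"
    "\<And>p p'. p \<in> P \<Longrightarrow> p' \<in> P \<Longrightarrow> p \<noteq> p' \<Longrightarrow> set p \<inter> set p' = {v0}"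
    "V = set cs \<union> \<Union> (set ` P)" "E = cycle_edges cs \<union> \<Union> (path_edges ` P)"
  using ps unfolding pstruct_def by auto

lemma nth_ne_hd:
  assumes "distinct p" "0 < i" "i < length p"
  shows "p ! i \<noteq> hd p"
proof -
  have "p \<noteq> []" using assms(3) by (cases p) auto
  then have "hd p = p ! 0" by (simp add: hd_conv_nth)
  moreover have "p ! i \<noteq> p ! 0"
  proof -
    have "0 < length p" using assms(3) by linarith
    then show ?thesis using nth_eq_iff_index_eq[OF assms(1) assms(3)] assms(2) by simp
  qed
  ultimately show ?thesis by simp
qed

lemma last_ne_hd:
  assumes "distinct p" "length p \<ge> 2"
  shows "last p \<noteq> hd p"
proof -
  have "p \<noteq> []" using assms by auto
  then have "last p = p ! (length p - 1)" by (rule last_conv_nth)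
  then show ?thesis using nth_ne_hd[OF assms(1), of "length p - 1"] assms(2) by simp
qed

lemma pstruct_deg:
  assumes ps: "pstruct V E v0 cs P" and sg: "simple_graph V E" and ce: "card E = card V"
  shows "degree E v0 = 2 + card P" "\<And>p. p \<in> P \<Longrightarrow> degree E (last p) = 1"
    "\<And>v. v \<in> V \<Longrightarrow> v \<noteq> v0 \<Longrightarrow> v \<notin> last ` P \<Longrightarrow> degree E v = 2"
    "last ` P \<subseteq> V - {v0}" "card (last ` P) = card P"
proof -
  note F = pstruct_facts[OF ps]
  have fV: "finite V" using sg_finV[OF sg] .
  let ?L = "last ` P"
  have lastV: "last p \<in> V - {v0}" if p: "p \<in> P" for p
  proof -
    have "p \<noteq> []" using F(6)[OF p] by auto
    then have "last p \<in> set p" by simp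
    then have "last p \<in> V" using F(10) p by auto
    moreover have "last p \<noteq> v0" using last_ne_hd[OF F(5)[OF p] F(6)[OF p]] F(7)[OF p] by simp
    ultimately show ?thesis by simp
  qed
  show LV: "?L \<subseteq> V - {v0}" using lastV by auto
  have inj: "inj_on last P"
  proof
    fix p p' assume pp: "p \<in> P" "p' \<in> P" "last p = last p'"
    show "p = p'"
    proof (rule ccontr)
      assume "p \<noteq> p'"
      then have i: "set p \<inter> set p' = {v0}" using F(9) pp by blast
      have "p \<noteq> []" "p' \<noteq> []" using F(6) pp by fastforce+
      then have "last p \<in> set p \<inter> set p'" using pp(3) by (metis IntI last_in_set)
      then show False using i lastV[OF pp(1)] by auto
    qed
  qed
  show cL: "card ?L = card P" using card_image[OF inj] .
  have pcs: "path_edges cs \<subseteq> E" "{last cs, hd cs} \<in> E" using F(11) by (auto simp: cycle_edges_def)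
  have ppE: "p \<in> P \<Longrightarrow> path_edges p \<subseteq> E" for p using F(11) by auto
  have csne: "cs \<noteq> []" using F(2) by auto
  have lb0: "degree E v0 \<ge> 2 + card P"
  proof -
    let ?S = "insert (cs ! 1) (insert (last cs) ((\<lambda>p. p ! 1) ` P))"
    have cs0: "cs ! 0 = v0" using F(3) csne by (simp add: hd_conv_nth)
    have lc: "last cs = cs ! (length cs - 1)" using csne by (rule last_conv_nth)
    have p1: "p ! 1 \<in> set p" "p ! 1 \<noteq> v0" "{v0, p ! 1} \<in> E" if p: "p \<in> P" for p
    proof -
      show "p ! 1 \<in> set p" using F(6)[OF p] by simp
      show "p ! 1 \<noteq> v0" using nth_ne_hd[OF F(5)[OF p], of 1] F(6)[OF p] F(7)[OF p] by simp
      have "p \<noteq> []" using F(6)[OF p] by auto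
      then have "p ! 0 = v0" using F(7)[OF p] by (simp add: hd_conv_nth)
      then show "{v0, p ! 1} \<in> E" using pe_mem[of 0 p] F(6)[OF p] ppE[OF p] by auto
    qed
    have sub: "?S \<subseteq> nbrs E v0"
    proof -
      have "{v0, cs ! 1} \<in> E" using pe_mem[of 0 cs] F(2) pcs(1) cs0 by auto
      moreover have "{v0, last cs} \<in> E" using pcs(2) F(3) by (simp add: insert_commute)
      ultimately show ?thesis using p1 by auto
    qed
    have c1: "cs ! 1 \<noteq> last cs"
      using lc nth_eq_iff_index_eq[OF F(1), of 1 "length cs - 1"] F(2) by auto
    have c1v: "cs ! 1 \<noteq> v0" using nth_ne_hd[OF F(1), of 1] F(2,3) by simp
    have clv: "last cs \<noteq> v0" using last_ne_hd[OF F(1)] F(2,3) by simp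
    have notin: "x \<in> set cs \<Longrightarrow> x \<noteq> v0 \<Longrightarrow> x \<notin> (\<lambda>p. p ! 1) ` P" for x
    proof
      assume x: "x \<in> set cs" "x \<noteq> v0" "x \<in> (\<lambda>p. p ! 1) ` P"
      then obtain p where p: "p \<in> P" "x = p ! 1" by blast
      then have "x \<in> set p \<inter> set cs" using p1(1)[OF p(1)] x(1) by simp
      then show False using F(8)[OF p(1)] x(2) by auto
    qed
    have inj1: "inj_on (\<lambda>p. p ! 1) P"
    proof
      fix p p' assume pp: "p \<in> P" "p' \<in> P" "p ! 1 = p' ! 1"
      show "p = p'"
      proof (rule ccontr)
        assume "p \<noteq> p'"
        then have "set p \<inter> set p' = {v0}" using F(9) pp by blast
        moreover have "p ! 1 \<in> set p \<inter> set p'" using p1(1)[OF pp(1)] p1(1)[OF pp(2)] pp(3) by simp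
        ultimately show False using p1(2)[OF pp(1)] by auto
      qed
    qed
    have "cs ! 1 \<in> set cs" using F(2) by simp
    have "last cs \<in> set cs" using csne by simp
    have fP: "finite ((\<lambda>p. p ! 1) ` P)" using F(4) by simp
    have "card ?S = 2 + card P"
      using c1 notin[OF \<open>cs ! 1 \<in> set cs\<close> c1v] notin[OF \<open>last cs \<in> set cs\<close> clv] fP
        card_image[OF inj1] by simp
    moreover have "card ?S \<le> card (nbrs E v0)" using sub nbrs_fin[OF sg] by (rule card_mono[rotated])
    ultimately show ?thesis using degree_nbrs[OF sg] by simp
  qed
  have lbL: "degree E (last p) \<ge> 1" if p: "p \<in> P" for p
  proof -
    have pne: "p \<noteq> []" using F(6)[OF p] by auto
    have "{p ! (length p - 2), p ! Suc (length p - 2)} \<in> E"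
      using pe_mem[of "length p - 2" p] F(6)[OF p] ppE[OF p] by auto
    moreover have "Suc (length p - 2) = length p - 1" using F(6)[OF p] by simp
    ultimately have "{p ! (length p - 2), last p} \<in> E" using last_conv_nth[OF pne] by simp
    then have "p ! (length p - 2) \<in> nbrs E (last p)" by (simp add: insert_commute)
    then have "nbrs E (last p) \<noteq> {}" by blast
    then show ?thesis using degree_nbrs[OF sg] nbrs_fin[OF sg] by (simp add: Suc_leI card_gt_0_iff)
  qed
  have lbO: "v \<in> V \<Longrightarrow> v \<noteq> v0 \<Longrightarrow> v \<notin> ?L \<Longrightarrow> degree E v \<ge> 2" for v
    using pstruct_lb[OF ps sg] by blast
  define lb where "lb v = (if v = v0 then 2 + card P else if v \<in> ?L then 1 else (2::nat))" for v
  have ge: "lb v \<le> degree E v" if "v \<in> V" for v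
    using lb0 lbL lbO that unfolding lb_def by auto
  have v0V: "v0 \<in> V" using F(3,10) csne by (metis UnI1 list.set_sel(1))
  have "(\<Sum>v\<in>V. lb v) = 2 * card V"
  proof -
    have s1: "(\<Sum>v\<in>V. lb v) = lb v0 + (\<Sum>v\<in>V - {v0}. lb v)" using fV v0V by (simp add: sum.remove)
    have s2: "(\<Sum>v\<in>V - {v0}. lb v) + (\<Sum>v\<in>V - {v0}. if v \<in> ?L then 1 else 0) = (\<Sum>v\<in>V - {v0}. 2)"
      by (subst sum.distrib[symmetric]) (rule sum.cong, auto simp: lb_def)
    have s3: "(\<Sum>v\<in>V - {v0}. if v \<in> ?L then 1 else (0::nat)) = card ?L"
    proof -
      have "(\<Sum>v\<in>V - {v0}. if v \<in> ?L then 1 else (0::nat)) = card {v \<in> V - {v0}. v \<in> ?L}"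
        using sum.inter_filter[of "V - {v0}" "\<lambda>_. 1::nat" "\<lambda>v. v \<in> ?L"] fV by simp
      also have "{v \<in> V - {v0}. v \<in> ?L} = ?L" using LV by auto
      finally show ?thesis .
    qed
    have s4: "(\<Sum>v\<in>V - {v0}. (2::nat)) = 2 * (card V - 1)" using fV v0V by simp
    have cV: "card V \<ge> 1" using fV v0V by (metis card_0_eq empty_iff less_one not_le)
    show ?thesis using s1 s2 s3 s4 cL cV by (simp add: lb_def)
  qed
  moreover have "(\<Sum>v\<in>V. degree E v) = 2 * card V" using handshake[OF sg] ce by simp
  ultimately have eqs: "(\<Sum>v\<in>V. lb v) = (\<Sum>v\<in>V. degree E v)" by simp
  have eq: "lb v = degree E v" if "v \<in> V" for v
    using sum_mono_inv[OF eqs ge that fV] .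
  show "degree E v0 = 2 + card P" using eq[OF v0V] by (simp add: lb_def)
  show "\<And>p. p \<in> P \<Longrightarrow> degree E (last p) = 1"
  proof -
    fix p assume p: "p \<in> P"
    then have "last p \<in> V" "last p \<noteq> v0" using lastV by auto
    then show "degree E (last p) = 1" using eq[of "last p"] p by (simp add: lb_def)
  qed
  show "\<And>v. v \<in> V \<Longrightarrow> v \<noteq> v0 \<Longrightarrow> v \<notin> ?L \<Longrightarrow> degree E v = 2"
  proof -
    fix v assume v: "v \<in> V" "v \<noteq> v0" "v \<notin> ?L"
    then show "degree E v = 2" using eq[OF v(1)] by (simp add: lb_def)
  qed
qed


lemma pstruct_exists:
  assumes "simple_graph V E" "connected_graph V E" "card E = card V" "v0 \<in> V"
    "\<forall>v\<in>V - {v0}. degree E v \<le> 2"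
  shows "\<exists>cs P. pstruct V E v0 cs P"
  using assms
proof (induction "card V" arbitrary: V E rule: less_induct)
  case less
  have sg: "simple_graph V E" and cn: "connected_graph V E" and ce: "card E = card V"
    and v0V: "v0 \<in> V" and low: "\<forall>v\<in>V - {v0}. degree E v \<le> 2" using less.prems by auto
  have fV: "finite V" using sg_finV[OF sg] .
  have fE: "finite E" using sg_finE[OF sg] .
  have c2: "card V \<ge> 2"
  proof -
    have "E \<noteq> {}" using ce v0V fV by auto
    then obtain e where "e \<in> E" by blast
    then obtain a b where ab: "e = {a, b}" "a \<noteq> b" "a \<in> V" "b \<in> V" using sg_edge[OF sg] by blast
    then have "card {a, b} \<le> card V" using fV by (intro card_mono) auto
    then show ?thesis using ab(2) by simp
  qed
  have pos: "v \<in> V \<Longrightarrow> degree E v \<ge> 1" for v using conn_degree_pos[OF sg cn _ c2] by blast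
  show ?case
  proof (cases "\<forall>v\<in>V - {v0}. degree E v = 2")
    case True
    have hs: "(\<Sum>v\<in>V. degree E v) = 2 * card V" using handshake[OF sg] ce by simp
    have "(\<Sum>v\<in>V. degree E v) = degree E v0 + (\<Sum>v\<in>V - {v0}. degree E v)"
      using fV v0V by (simp add: sum.remove)
    also have "(\<Sum>v\<in>V - {v0}. degree E v) = (\<Sum>v\<in>V - {v0}. 2)" using True by simp
    also have "\<dots> = 2 * (card V - 1)" using fV v0V by simp
    finally have "degree E v0 = 2" using hs c2 by simp
    then have d2: "\<forall>v\<in>V. degree E v = 2" using True by blast
    obtain cs where cs: "distinct cs" "length cs \<ge> 3" "hd cs = v0" "set cs = V" "cycle_edges cs = E"
      using cycle_lemma[OF sg cn ce d2 v0V] by blast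
    have "pstruct V E v0 cs {}" unfolding pstruct_def using cs by simp
    then show ?thesis by blast
  next
    case False
    then obtain x where x: "x \<in> V" "x \<noteq> v0" "degree E x \<noteq> 2" by blast
    then have dx: "degree E x = 1" using pos[OF x(1)] low by force
    obtain y where y: "nbrs E x = {y}" using degree1_nbr[OF sg dx] by blast
    have xyE: "{x, y} \<in> E" using y by auto
    have yV: "y \<in> V" and yx: "y \<noteq> x" using sg_edge_V[OF sg xyE] sg_edge_ne[OF sg xyE] by auto
    let ?V = "V - {x}" and ?E = "E - {{x, y}}"
    have sg': "simple_graph ?V ?E" using sg_remove_leaf[OF sg y] .
    have cn': "connected_graph ?V ?E" using leaf_remove_conn[OF sg cn x(1) y] v0V x(2) by blast
    have ce': "card ?E = card ?V" using ce xyE x(1) fE fV by simp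
    have lt: "card ?V < card V" using fV x(1) c2 by simp
    have v0V': "v0 \<in> ?V" using v0V x(2) by simp
    have low': "\<forall>v\<in>?V - {v0}. degree ?E v \<le> 2"
    proof
      fix v assume "v \<in> ?V - {v0}"
      then have "degree E v \<le> 2" using low by auto
      then show "degree ?E v \<le> 2" using degree_remove_le[OF fE, of "{{x,y}}" v] by simp
    qed
    have "\<exists>cs P. pstruct ?V ?E v0 cs P" by (rule less.hyps[OF lt sg' cn' ce' v0V' low'])
    then obtain cs P where ps: "pstruct ?V ?E v0 cs P" by blast
    note F = pstruct_facts[OF ps]
    have xnot: "x \<notin> ?V" by simp
    have xcs: "x \<notin> set cs" using F(10) by auto
    have xp: "p \<in> P \<Longrightarrow> x \<notin> set p" for p using F(10) by auto
    have yV': "y \<in> ?V" using yV yx by simp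
    have Vx: "V = insert x ?V" using x(1) by auto
    have Ex: "E = insert {x, y} ?E" using xyE by auto
    show ?thesis
    proof (cases "y = v0")
      case True
      let ?p = "[v0, x]"
      let ?P = "insert ?p P"
      have pnot: "?p \<notin> P" using xp[of ?p] by auto
      have "pstruct V E v0 cs ?P"
        unfolding pstruct_def
      proof (intro conjI)
        show "distinct cs" "length cs \<ge> 3" "hd cs = v0" using F by auto
        show "finite ?P" using F(4) by simp
        show "\<forall>p\<in>?P. distinct p \<and> length p \<ge> 2 \<and> hd p = v0 \<and> set p \<inter> set cs = {v0}"
        proof
          fix p assume "p \<in> ?P"
          then consider "p = ?p" | "p \<in> P" by blast
          then show "distinct p \<and> length p \<ge> 2 \<and> hd p = v0 \<and> set p \<inter> set cs = {v0}"
          proof cases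
            case 1
            have "v0 \<in> set cs" using F(1,2,3) by (metis hd_in_set list.size(3) not_numeral_le_zero)
            then show ?thesis using 1 x(2) xcs by auto
          next
            case 2 then show ?thesis using F(5-8) by blast
          qed
        qed
        show "\<forall>p\<in>?P. \<forall>p'\<in>?P. p \<noteq> p' \<longrightarrow> set p \<inter> set p' = {v0}"
        proof (intro ballI impI)
          fix p p' assume pp: "p \<in> ?P" "p' \<in> ?P" "p \<noteq> p'"
          have hv: "q \<in> P \<Longrightarrow> v0 \<in> set q" for q using F(6,7) by (metis hd_in_set list.size(3) not_numeral_le_zero)
          show "set p \<inter> set p' = {v0}"
          proof (cases "p = ?p")
            case True
            then have "p' \<in> P" using pp by auto
            then show ?thesis using True xp hv by auto
          next
            case False
            then have pP: "p \<in> P" using pp by auto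
            show ?thesis
            proof (cases "p' = ?p")
              case True then show ?thesis using pP xp hv by auto
            next
              case False
              then have "p' \<in> P" using pp by auto
              then show ?thesis using F(9) pP pp(3) by blast
            qed
          qed
        qed
        show "V = set cs \<union> \<Union> (set ` ?P)"
        proof -
          have "set cs \<union> \<Union> (set ` ?P) = insert x (set cs \<union> \<Union> (set ` P)) \<union> {v0}" by auto
          also have "\<dots> = insert x ?V" using F(10) v0V' by auto
          finally show ?thesis using Vx by simp
        qed
        show "E = cycle_edges cs \<union> \<Union> (path_edges ` ?P)"
        proof -
          have "cycle_edges cs \<union> \<Union> (path_edges ` ?P) = insert {v0, x} (cycle_edges cs \<union> \<Union> (path_edges ` P))"
            using path_edges_two[of v0 x] by auto
          also have "\<dots> = insert {x, y} ?E" using F(11) True by (simp add: insert_commute)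
          finally show ?thesis using Ex by simp
        qed
      qed
      then show ?thesis by blast
    next
      case False
      have dy: "degree E y \<le> 2" using low yV False by auto
      have dy': "degree ?E y \<le> 1" using degree_remove[OF fE xyE, of y] dy by simp
      have "y \<in> last ` P"
      proof (rule ccontr)
        assume "y \<notin> last ` P"
        then have "degree ?E y \<ge> 2" using pstruct_lb[OF ps sg' yV' False] by blast
        then show False using dy' by simp
      qed
      then obtain p where p: "p \<in> P" "y = last p" by blast
      have pne: "p \<noteq> []" using F(6)[OF p(1)] by auto
      let ?q = "p @ [x]"
      let ?P = "insert ?q (P - {p})"
      have qnot: "?q \<notin> P - {p}" using xp[of ?q] by auto
      have hv: "q \<in> P \<Longrightarrow> v0 \<in> set q" for q using F(6,7) by (metis hd_in_set list.size(3) not_numeral_le_zero)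
      have "pstruct V E v0 cs ?P"
        unfolding pstruct_def
      proof (intro conjI)
        show "distinct cs" "length cs \<ge> 3" "hd cs = v0" using F by auto
        show "finite ?P" using F(4) by simp
        show "\<forall>r\<in>?P. distinct r \<and> length r \<ge> 2 \<and> hd r = v0 \<and> set r \<inter> set cs = {v0}"
        proof
          fix r assume "r \<in> ?P"
          then consider "r = ?q" | "r \<in> P" by blast
          then show "distinct r \<and> length r \<ge> 2 \<and> hd r = v0 \<and> set r \<inter> set cs = {v0}"
          proof cases
            case 1
            have "distinct ?q" using F(5)[OF p(1)] xp[OF p(1)] by simp
            moreover have "length ?q \<ge> 2" using F(6)[OF p(1)] by simp
            moreover have "hd ?q = v0" using F(7)[OF p(1)] pne by simp
            moreover have "set ?q \<inter> set cs = {v0}" using F(8)[OF p(1)] xcs by auto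
            ultimately show ?thesis using 1 by blast
          next
            case 2 then show ?thesis using F(5-8) by blast
          qed
        qed
        show "\<forall>r\<in>?P. \<forall>r'\<in>?P. r \<noteq> r' \<longrightarrow> set r \<inter> set r' = {v0}"
        proof (intro ballI impI)
          fix r r' assume rr: "r \<in> ?P" "r' \<in> ?P" "r \<noteq> r'"
          have key: "set ?q \<inter> set s = {v0}" if s: "s \<in> P" "s \<noteq> p" for s
          proof -
            have "set p \<inter> set s = {v0}" using F(9)[OF p(1) s(1)] s(2) by simp
            moreover have "x \<notin> set s" using xp[OF s(1)] .
            ultimately show ?thesis by auto
          qed
          show "set r \<inter> set r' = {v0}"
          proof (cases "r = ?q")
            case True
            then have "r' \<in> P" "r' \<noteq> p" using rr by auto
            then show ?thesis using key True by blast
          next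
            case False
            then have rP: "r \<in> P" "r \<noteq> p" using rr by auto
            show ?thesis
            proof (cases "r' = ?q")
              case True then show ?thesis using key[OF rP] by (simp add: Int_commute)
            next
              case False
              then have "r' \<in> P" using rr by auto
              then show ?thesis using F(9) rP(1) rr(3) by blast
            qed
          qed
        qed
        show "V = set cs \<union> \<Union> (set ` ?P)"
        proof -
          have "\<Union> (set ` ?P) = insert x (\<Union> (set ` P))" using p(1) by auto
          then have "set cs \<union> \<Union> (set ` ?P) = insert x ?V" using F(10) by auto
          then show ?thesis using Vx by simp
        qed
        show "E = cycle_edges cs \<union> \<Union> (path_edges ` ?P)"
        proof -
          have pq: "path_edges ?q = insert {y, x} (path_edges p)" using path_edges_snoc[OF pne] p(2) by simp
          have "\<Union> (path_edges ` ?P) = insert {y, x} (\<Union> (path_edges ` P))" using p(1) pq by auto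
          then have "cycle_edges cs \<union> \<Union> (path_edges ` ?P) = insert {y, x} ?E" using F(11) by auto
          also have "{y, x} = {x, y}" by (rule insert_commute)
          finally show ?thesis using Ex by simp
        qed
      qed
      then show ?thesis by blast
    qed
  qed
qed


lemma len3_pred:
  assumes "distinct p" "length p \<ge> 3" "hd p = v0"
  shows "p ! (length p - 2) \<noteq> v0" "{p ! (length p - 2), last p} \<in> path_edges p"
proof -
  show "p ! (length p - 2) \<noteq> v0" using nth_ne_hd[OF assms(1), of "length p - 2"] assms by simp
  have pne: "p \<noteq> []" using assms(2) by auto
  have "{p ! (length p - 2), p ! Suc (length p - 2)} \<in> path_edges p"
    using pe_mem[of "length p - 2" p] assms(2) by simp
  moreover have "Suc (length p - 2) = length p - 1" using assms(2) by simp
  ultimately show "{p ! (length p - 2), last p} \<in> path_edges p" using last_conv_nth[OF pne] by simp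
qed

lemma U_Delta_iff:
  assumes sg: "simple_graph V E" and un: "unicyclic V E" and D3: "\<Delta> \<ge> 3"
  shows "is_U_Delta V E \<Delta> \<longleftrightarrow> (\<exists>v0\<in>V. degree E v0 = \<Delta> \<and> (\<forall>v\<in>V - {v0}. degree E v \<le> 2)
            \<and> (\<forall>u\<in>nbrs E v0. degree E u = 2))"
proof
  have cn: "connected_graph V E" and ce: "card E = card V" using un by (auto simp: unicyclic_def)
  assume "is_U_Delta V E \<Delta>"
  then obtain cs ps where cs: "distinct cs" "length cs \<ge> 3" "length ps = \<Delta> - 2"
    and pp: "\<forall>p\<in>set ps. distinct p \<and> length p \<ge> 3 \<and> hd p = hd cs \<and> set p \<inter> set cs = {hd cs}"
    and pw: "\<forall>i<length ps. \<forall>j<length ps. i \<noteq> j \<longrightarrow> set (ps ! i) \<inter> set (ps ! j) = {hd cs}"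
    and VE: "V = set cs \<union> \<Union> (set ` set ps)" "E = cycle_edges cs \<union> \<Union> (path_edges ` set ps)"
    unfolding is_U_Delta_def by blast
  let ?v0 = "hd cs" and ?P = "set ps"
  have ps: "pstruct V E ?v0 cs ?P"
    unfolding pstruct_def
  proof (intro conjI)
    show "\<forall>p\<in>?P. distinct p \<and> length p \<ge> 2 \<and> hd p = ?v0 \<and> set p \<inter> set cs = {?v0}"
      using pp by fastforce
    show "\<forall>p\<in>?P. \<forall>p'\<in>?P. p \<noteq> p' \<longrightarrow> set p \<inter> set p' = {?v0}"
    proof (intro ballI impI)
      fix p p' assume "p \<in> ?P" "p' \<in> ?P" "p \<noteq> p'"
      then obtain i j where "i < length ps" "j < length ps" "ps ! i = p" "ps ! j = p'"
        by (auto simp: in_set_conv_nth)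
      then show "set p \<inter> set p' = {?v0}" using pw \<open>p \<noteq> p'\<close> by blast
    qed
  qed (use cs VE in auto)
  have dps: "distinct ps"
  proof (rule distinct_conv_nth[THEN iffD2], intro allI impI)
    fix i j assume ij: "i < length ps" "j < length ps" "i \<noteq> j"
    show "ps ! i \<noteq> ps ! j"
    proof
      assume eq: "ps ! i = ps ! j"
      have "ps ! i \<in> ?P" using ij by simp
      then have d: "distinct (ps ! i)" "length (ps ! i) \<ge> 3" using pp by auto
      have "set (ps ! i) = {?v0}" using pw ij eq by fastforce
      then have "card (set (ps ! i)) = 1" by simp
      moreover have "card (set (ps ! i)) = length (ps ! i)" using d(1) by (rule distinct_card)
      ultimately show False using d(2) by simp
    qed
  qed
  have cP: "card ?P = \<Delta> - 2" using distinct_card[OF dps] cs(3) by simp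
  note D = pstruct_deg[OF ps sg ce]
  note F = pstruct_facts[OF ps]
  have v0V: "?v0 \<in> V" using VE(1) cs(2) by (metis UnI1 hd_in_set list.size(3) not_numeral_le_zero)
  show "\<exists>v0\<in>V. degree E v0 = \<Delta> \<and> (\<forall>v\<in>V - {v0}. degree E v \<le> 2) \<and> (\<forall>u\<in>nbrs E v0. degree E u = 2)"
  proof (intro bexI conjI ballI)
    show "degree E ?v0 = \<Delta>" using D(1) cP D3 by simp
    show "?v0 \<in> V" by (rule v0V)
    fix v assume v: "v \<in> V - {?v0}"
    show "degree E v \<le> 2"
    proof (cases "v \<in> last ` ?P")
      case True then show ?thesis using D(2) by auto
    next
      case False then show ?thesis using D(3) v by auto
    qed
  next
    fix u assume u: "u \<in> nbrs E ?v0"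
    have uE: "{?v0, u} \<in> E" using u by simp
    have uV: "u \<in> V" using sg_edge_V[OF sg uE] by simp
    have uv: "u \<noteq> ?v0" using sg_edge_ne[OF sg uE] by simp
    show "degree E u = 2"
    proof (cases "u \<in> last ` ?P")
      case False then show ?thesis using D(3) uV uv by auto
    next
      case True
      then obtain p where p: "p \<in> ?P" "u = last p" by blast
      have pd: "distinct p" "length p \<ge> 3" "hd p = ?v0" using pp p(1) by auto
      note L = len3_pred[OF pd]
      have e2: "{u, p ! (length p - 2)} \<in> E" using L(2) p VE(2) by (auto simp: insert_commute)
      have e1: "{u, ?v0} \<in> E" using uE by (simp add: insert_commute)
      have "degree E u \<ge> 2" using two_nbrs[OF sg e1 e2] L(1) by simp
      moreover have "degree E u = 1" using D(2)[OF p(1)] p(2) by simp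
      ultimately show ?thesis by simp
    qed
  qed
next
  have cn: "connected_graph V E" and ce: "card E = card V" using un by (auto simp: unicyclic_def)
  assume "\<exists>v0\<in>V. degree E v0 = \<Delta> \<and> (\<forall>v\<in>V - {v0}. degree E v \<le> 2) \<and> (\<forall>u\<in>nbrs E v0. degree E u = 2)"
  then obtain v0 where v0: "v0 \<in> V" "degree E v0 = \<Delta>" "\<forall>v\<in>V - {v0}. degree E v \<le> 2"
    "\<forall>u\<in>nbrs E v0. degree E u = 2" by blast
  obtain cs P where ps: "pstruct V E v0 cs P" using pstruct_exists[OF sg cn ce v0(1) v0(3)] by blast
  note D = pstruct_deg[OF ps sg ce]
  note F = pstruct_facts[OF ps]
  have cP: "card P = \<Delta> - 2" using D(1) v0(2) by simp
  have l3: "length p \<ge> 3" if p: "p \<in> P" for p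
  proof (rule ccontr)
    assume "\<not> length p \<ge> 3"
    then have l2: "length p = 2" using F(6)[OF p] by simp
    have pne: "p \<noteq> []" using l2 by auto
    have "{p ! 0, p ! Suc 0} \<in> path_edges p" using pe_mem[of 0 p] l2 by simp
    moreover have "p ! 0 = v0" using F(7)[OF p] pne by (simp add: hd_conv_nth)
    moreover have "p ! Suc 0 = last p" using last_conv_nth[OF pne] l2 by simp
    ultimately have "{v0, last p} \<in> E" using F(11) p by auto
    then have "degree E (last p) = 2" using v0(4) by simp
    then show False using D(2)[OF p] by simp
  qed
  obtain ps where ps': "set ps = P" "distinct ps" using finite_distinct_list[OF F(4)] by blast
  show "is_U_Delta V E \<Delta>"
    unfolding is_U_Delta_def
  proof (intro exI conjI)
    show "distinct cs" "length cs \<ge> 3" using F by auto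
    show "length ps = \<Delta> - 2" using distinct_card[OF ps'(2)] ps'(1) cP by simp
    show "\<forall>p\<in>set ps. distinct p \<and> length p \<ge> 3 \<and> hd p = hd cs \<and> set p \<inter> set cs = {hd cs}"
      using F(3,5,7,8) l3 ps'(1) by auto
    show "\<forall>i<length ps. \<forall>j<length ps. i \<noteq> j \<longrightarrow> set (ps ! i) \<inter> set (ps ! j) = {hd cs}"
    proof (intro allI impI)
      fix i j assume ij: "i < length ps" "j < length ps" "i \<noteq> j"
      then have "ps ! i \<noteq> ps ! j" using nth_eq_iff_index_eq[OF ps'(2)] by simp
      moreover have "ps ! i \<in> P" "ps ! j \<in> P" using ij ps'(1) by auto
      ultimately show "set (ps ! i) \<inter> set (ps ! j) = {hd cs}" using F(9) F(3) by simp
    qed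
    show "V = set cs \<union> \<Union> (set ` set ps)" using F(10) ps'(1) by simp
    show "E = cycle_edges cs \<union> \<Union> (path_edges ` set ps)" using F(11) ps'(1) by simp
  qed
qed


definition UEp :: "nat \<Rightarrow> nat \<Rightarrow> nat \<Rightarrow> nat \<Rightarrow> bool" where
  "UEp p q i j \<longleftrightarrow> (i = 0 \<and> j = 1) \<or> (i = 1 \<and> j = 2) \<or> (i = 0 \<and> j = 2) \<or> (i = 0 \<and> 3 \<le> j \<and> j < 3 + p)
     \<or> (i = 0 \<and> (\<exists>t<q. j = 3 + p + 2 * t)) \<or> (\<exists>t<q. i = 3 + p + 2 * t \<and> j = 4 + p + 2 * t)"

lemma UE_iff:
  "{i, j} \<in> U_n_Delta_E n \<Delta> \<longleftrightarrow> UEp (2 * \<Delta> - n - 1) (n - \<Delta> - 1) i j \<or> UEp (2 * \<Delta> - n - 1) (n - \<Delta> - 1) j i"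
proof -
  define p where "p = 2 * \<Delta> - n - 1"
  define q where "q = n - \<Delta> - 1"
  have E: "U_n_Delta_E n \<Delta> = {{0, 1}, {1, 2}, {0, 2}} \<union> {{0, 3 + i} | i. i < p} \<union>
     {{0, 3 + p + 2 * j} | j. j < q} \<union> {{3 + p + 2 * j, 4 + p + 2 * j} | j. j < q}"
    unfolding U_n_Delta_E_def p_def q_def Let_def by simp
  have a: "{i, j} \<in> {{0, 3 + i} | i. i < p} \<longleftrightarrow> (i = 0 \<and> 3 \<le> j \<and> j < 3 + p) \<or> (j = 0 \<and> 3 \<le> i \<and> i < 3 + p)"
  proof
    assume "{i, j} \<in> {{0, 3 + i} | i. i < p}"
    then obtain t where "t < p" "{i, j} = {0, 3 + t}" by blast
    then show "(i = 0 \<and> 3 \<le> j \<and> j < 3 + p) \<or> (j = 0 \<and> 3 \<le> i \<and> i < 3 + p)"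
      by (auto simp: doubleton_eq_iff)
  next
    assume h: "(i = 0 \<and> 3 \<le> j \<and> j < 3 + p) \<or> (j = 0 \<and> 3 \<le> i \<and> i < 3 + p)"
    show "{i, j} \<in> {{0, 3 + i} | i. i < p}"
    proof (cases "i = 0 \<and> 3 \<le> j \<and> j < 3 + p")
      case True
      then have "{i, j} = {0, 3 + (j - 3)} \<and> j - 3 < p" by auto
      then show ?thesis by blast
    next
      case False
      then have "j = 0 \<and> 3 \<le> i \<and> i < 3 + p" using h by blast
      then have "{i, j} = {0, 3 + (i - 3)} \<and> i - 3 < p" by (auto simp: insert_commute)
      then show ?thesis by blast
    qed
  qed
  have b: "{i, j} \<in> {{0, 3 + p + 2 * t} | t. t < q} \<longleftrightarrow>
      (i = 0 \<and> (\<exists>t<q. j = 3 + p + 2 * t)) \<or> (j = 0 \<and> (\<exists>t<q. i = 3 + p + 2 * t))"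
    by (auto simp: doubleton_eq_iff)
  have c: "{i, j} \<in> {{3 + p + 2 * t, 4 + p + 2 * t} | t. t < q} \<longleftrightarrow>
      (\<exists>t<q. i = 3 + p + 2 * t \<and> j = 4 + p + 2 * t) \<or> (\<exists>t<q. j = 3 + p + 2 * t \<and> i = 4 + p + 2 * t)"
    by (auto simp: doubleton_eq_iff)
  have d: "{i, j} \<in> {{0, 1}, {1, 2}, {0, 2}} \<longleftrightarrow>
     (i = 0 \<and> j = 1) \<or> (i = 1 \<and> j = 2) \<or> (i = 0 \<and> j = 2) \<or> (j = 0 \<and> i = 1) \<or> (j = 1 \<and> i = 2) \<or> (j = 0 \<and> i = 2)"
    by (auto simp: doubleton_eq_iff)
  have "{i, j} \<in> U_n_Delta_E n \<Delta> \<longleftrightarrow> UEp p q i j \<or> UEp p q j i"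
    unfolding E UEp_def Un_iff a b c d by argo
  then show ?thesis unfolding p_def q_def .
qed


definition UNb :: "nat \<Rightarrow> nat \<Rightarrow> nat \<Rightarrow> nat \<Rightarrow> nat set" where
  "UNb n p q i = {j. j < n \<and> (UEp p q i j \<or> UEp p q j i)}"

lemma par1[simp]: "((3::nat) + p + 2 * t = 4 + p + 2 * t') = False" by presburger
lemma par2[simp]: "((4::nat) + p + 2 * t = 3 + p + 2 * t') = False" by presburger

lemma UNb_mem: "j \<in> UNb n p q i \<longleftrightarrow> j < n \<and> (UEp p q i j \<or> UEp p q j i)"
  by (simp add: UNb_def)

lemma R1: assumes "n = 3 + p + 2 * q" shows "UNb n p q 1 = {0, 2}"
  using assms unfolding UNb_def UEp_def by auto

lemma R2: assumes "n = 3 + p + 2 * q" shows "UNb n p q 2 = {0, 1}"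
  using assms unfolding UNb_def UEp_def by auto

lemma R3: assumes "n = 3 + p + 2 * q" "3 \<le> i" "i < 3 + p" shows "UNb n p q i = {0}"
  using assms unfolding UNb_def UEp_def by auto

lemma R4: assumes "n = 3 + p + 2 * q" "t < q" shows "UNb n p q (3 + p + 2 * t) = {0, 4 + p + 2 * t}"
  using assms unfolding UNb_def UEp_def by auto

lemma R5: assumes "n = 3 + p + 2 * q" "t < q" shows "UNb n p q (4 + p + 2 * t) = {3 + p + 2 * t}"
  using assms unfolding UNb_def UEp_def by auto

lemma R0: assumes "n = 3 + p + 2 * q"
  shows "UNb n p q 0 = {1, 2} \<union> {3..<3 + p} \<union> (\<lambda>t. 3 + p + 2 * t) ` {..<q}"
  using assms unfolding UNb_def UEp_def by auto


lemma regions: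
  fixes n p q i :: nat
  assumes "n = 3 + p + 2 * q" "i < n" "i \<noteq> 0"
  shows "i = 1 \<or> i = 2 \<or> (3 \<le> i \<and> i < 3 + p) \<or> (\<exists>t<q. i = 3 + p + 2 * t) \<or> (\<exists>t<q. i = 4 + p + 2 * t)"
proof -
  consider "i = 1" | "i = 2" | "3 \<le> i \<and> i < 3 + p" | "i \<ge> 3 + p" using assms by linarith
  then show ?thesis
  proof cases
    case 4
    define r where "r = i - (3 + p)"
    have ir: "i = 3 + p + r" using 4 r_def by simp
    have rq: "r < 2 * q" using assms ir by simp
    show ?thesis
    proof (cases "even r")
      case True
      then obtain t where "r = 2 * t" by blast
      then show ?thesis using ir rq by auto
    next
      case False
      then obtain t where "r = 2 * t + 1" using oddE by blast
      then show ?thesis using ir rq by auto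
    qed
  qed auto
qed

lemma UNb_card0: assumes "n = 3 + p + 2 * q" shows "card (UNb n p q 0) = 2 + p + q"
proof -
  have inj: "inj_on (\<lambda>t. 3 + p + 2 * t) {..<q}" by (auto simp: inj_on_def)
  have d1: "({1, 2} \<union> {3..<3 + p}) \<inter> (\<lambda>t. 3 + p + 2 * t) ` {..<q} = {}" by auto
  have d2: "{1, 2} \<inter> {3..<3 + p} = {}" by auto
  have "card ({1, 2} \<union> {3..<3 + p} \<union> (\<lambda>t. 3 + p + 2 * t) ` {..<q})
      = card ({1, 2} \<union> {3..<3 + (p::nat)}) + card ((\<lambda>t. 3 + p + 2 * t) ` {..<q})"
    by (rule card_Un_disjoint) (use d1 in auto)
  also have "card ({1, 2} \<union> {3..<3 + (p::nat)}) = 2 + p"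
    by (subst card_Un_disjoint) (use d2 in auto)
  also have "card ((\<lambda>t. 3 + p + 2 * t) ` {..<q}) = q" using card_image[OF inj] by simp
  finally show ?thesis using R0[OF assms] by simp
qed

lemma UNb_le2:
  assumes "n = 3 + p + 2 * q" "i < n" "i \<noteq> 0"
  shows "card (UNb n p q i) \<le> 2"
proof -
  consider "i = 1" | "i = 2" | "3 \<le> i \<and> i < 3 + p" | "\<exists>t<q. i = 3 + p + 2 * t" | "\<exists>t<q. i = 4 + p + 2 * t"
    using regions[OF assms] by blast
  then show ?thesis
  proof cases
    case 1 then show ?thesis using R1[OF assms(1)] by simp
  next
    case 2 then show ?thesis using R2[OF assms(1)] by simp
  next
    case 3 then show ?thesis using R3[OF assms(1)] by simp
  next
    case 4
    then obtain t where "t < q" "i = 3 + p + 2 * t" by blast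
    then show ?thesis using R4[OF assms(1)] by (simp add: card_insert_if)
  next
    case 5
    then obtain t where "t < q" "i = 4 + p + 2 * t" by blast
    then show ?thesis using R5[OF assms(1)] by simp
  qed
qed

lemma KU:
  assumes "n = 3 + p + 2 * q"
  shows "{i. i < n \<and> i \<in> UNb n p q 0 \<and> card (UNb n p q i) = 1} = {3..<3 + p}"
proof
  show "{3..<3 + p} \<subseteq> {i. i < n \<and> i \<in> UNb n p q 0 \<and> card (UNb n p q i) = 1}"
    using R3[OF assms] R0[OF assms] assms by auto
  show "{i. i < n \<and> i \<in> UNb n p q 0 \<and> card (UNb n p q i) = 1} \<subseteq> {3..<3 + p}"
  proof
    fix i assume i: "i \<in> {i. i < n \<and> i \<in> UNb n p q 0 \<and> card (UNb n p q i) = 1}"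
    then have i0: "i \<in> UNb n p q 0" "i < n" "card (UNb n p q i) = 1" by auto
    have "i \<noteq> 0" using i0(1) R0[OF assms] by auto
    then consider "i = 1" | "i = 2" | "3 \<le> i \<and> i < 3 + p" | "\<exists>t<q. i = 3 + p + 2 * t" | "\<exists>t<q. i = 4 + p + 2 * t"
      using regions[OF assms i0(2)] by blast
    then show "i \<in> {3..<3 + p}"
    proof cases
      case 1 then show ?thesis using i0(3) R1[OF assms] by simp
    next
      case 2 then show ?thesis using i0(3) R2[OF assms] by simp
    next
      case 3 then show ?thesis by simp
    next
      case 4
      then obtain t where "t < q" "i = 3 + p + 2 * t" by blast
      then show ?thesis using i0(3) R4[OF assms] by simp
    next
      case 5
      then obtain t where "t < q" "i = 4 + p + 2 * t" by blast
      then show ?thesis using i0(1) R0[OF assms] by auto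
    qed
  qed
qed

lemma UN_eq:
  "{j. j < n \<and> {i, j} \<in> U_n_Delta_E n \<Delta>} = UNb n (2 * \<Delta> - n - 1) (n - \<Delta> - 1) i"
  unfolding UNb_def UE_iff by simp


lemma pq_facts:
  fixes n \<Delta> :: nat
  assumes "\<Delta> \<le> n - 2" "n + 2 \<le> 2 * \<Delta>" "n \<ge> 5"
  shows "n = 3 + (2 * \<Delta> - n - 1) + 2 * (n - \<Delta> - 1)" "\<Delta> = 2 + (2 * \<Delta> - n - 1) + (n - \<Delta> - 1)"
  using assms by auto

lemma iso_to_deg:
  assumes sg: "simple_graph V E" and cV: "card V = n" and n5: "n \<ge> 5"
    and hD: "\<Delta> \<le> n - 2" and h2: "n + 2 \<le> 2 * \<Delta>" and mx: "\<forall>v\<in>V. degree E v \<le> \<Delta>"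
    and iso: "graph_iso V E (U_n_Delta_V n \<Delta>) (U_n_Delta_E n \<Delta>)"
  shows "\<exists>v0\<in>V. degree E v0 = \<Delta> \<and> (\<forall>v\<in>V - {v0}. degree E v \<le> 2) \<and> card (Kset V E v0) = 2 * \<Delta> - n - 1"
proof -
  define p where "p = 2 * \<Delta> - n - 1"
  define q where "q = n - \<Delta> - 1"
  have nq: "n = 3 + p + 2 * q" and Dq: "\<Delta> = 2 + p + q" using pq_facts[OF hD h2 n5] by (simp_all add: p_def q_def)
  obtain f where bij: "bij_betw f V {0..<n}" and ed: "\<forall>x\<in>V. \<forall>y\<in>V. {x, y} \<in> E \<longleftrightarrow> {f x, f y} \<in> U_n_Delta_E n \<Delta>"
    using iso unfolding graph_iso_def U_n_Delta_V_def by blast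
  have inj: "inj_on f V" using bij by (simp add: bij_betw_def)
  have img: "f ` V = {0..<n}" using bij by (simp add: bij_betw_def)
  have UNe: "{j. j < n \<and> {i, j} \<in> U_n_Delta_E n \<Delta>} = UNb n p q i" for i
    unfolding p_def q_def by (rule UN_eq)
  have fn: "f ` nbrs E x = UNb n p q (f x)" if x: "x \<in> V" for x
  proof
    show "f ` nbrs E x \<subseteq> UNb n p q (f x)"
    proof
      fix j assume "j \<in> f ` nbrs E x"
      then obtain y where y: "y \<in> nbrs E x" "j = f y" by blast
      have yV: "y \<in> V" using y(1) nbrs_sub[OF sg] by blast
      have "{f x, f y} \<in> U_n_Delta_E n \<Delta>" using ed x yV y(1) by simp
      moreover have "f y < n" using img yV by auto
      ultimately show "j \<in> UNb n p q (f x)" using UNe[of "f x"] y(2) by blast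
    qed
    show "UNb n p q (f x) \<subseteq> f ` nbrs E x"
    proof
      fix j assume "j \<in> UNb n p q (f x)"
      then have j: "j < n" "{f x, j} \<in> U_n_Delta_E n \<Delta>" using UNe[of "f x"] by blast+
      then obtain y where y: "y \<in> V" "j = f y" using img by (metis atLeastLessThan_iff imageE zero_le)
      then have "{x, y} \<in> E" using ed x j(2) by simp
      then show "j \<in> f ` nbrs E x" using y by simp
    qed
  qed
  have deg: "degree E x = card (UNb n p q (f x))" if x: "x \<in> V" for x
  proof -
    have "inj_on f (nbrs E x)" using inj nbrs_sub[OF sg] by (rule inj_on_subset)
    then have "card (f ` nbrs E x) = card (nbrs E x)" by (rule card_image)
    then show ?thesis using fn[OF x] degree_nbrs[OF sg] by simp
  qed
  have "0 \<in> f ` V" using img n5 by simp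
  then obtain v0 where v0: "v0 \<in> V" "f v0 = 0" by (metis imageE)
  show ?thesis
  proof (intro bexI conjI ballI)
    show "v0 \<in> V" by (rule v0(1))
    show "degree E v0 = \<Delta>" using deg[OF v0(1)] v0(2) UNb_card0[OF nq] Dq by simp
    fix v assume v: "v \<in> V - {v0}"
    then have "f v \<noteq> 0" using inj v0 by (metis DiffD1 DiffD2 inj_on_eq_iff singletonI)
    moreover have "f v < n" using img v by auto
    ultimately show "degree E v \<le> 2" using deg[of v] v UNb_le2[OF nq] by simp
  next
    let ?K = "Kset V E v0"
    have KV: "?K \<subseteq> V" by (auto simp: Kset_def)
    have fK: "f ` ?K = {3..<3 + p}"
    proof -
      have "f ` ?K = {i. i < n \<and> i \<in> UNb n p q 0 \<and> card (UNb n p q i) = 1}"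
      proof
        show "f ` ?K \<subseteq> {i. i < n \<and> i \<in> UNb n p q 0 \<and> card (UNb n p q i) = 1}"
        proof
          fix i assume "i \<in> f ` ?K"
          then obtain u where u: "u \<in> ?K" "i = f u" by blast
          then have uV: "u \<in> V" "u \<in> nbrs E v0" "degree E u = 1" by (auto simp: Kset_def)
          have "f u \<in> f ` nbrs E v0" using uV(2) by (rule imageI)
          then have "f u \<in> UNb n p q 0" using fn[OF v0(1)] v0(2) by simp
          moreover have "f u < n" using img uV(1) by auto
          moreover have "card (UNb n p q (f u)) = 1" using deg[OF uV(1)] uV(3) by simp
          ultimately show "i \<in> {i. i < n \<and> i \<in> UNb n p q 0 \<and> card (UNb n p q i) = 1}" using u(2) by simp
        qed
        show "{i. i < n \<and> i \<in> UNb n p q 0 \<and> card (UNb n p q i) = 1} \<subseteq> f ` ?K"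
        proof
          fix i assume i: "i \<in> {i. i < n \<and> i \<in> UNb n p q 0 \<and> card (UNb n p q i) = 1}"
          then have "i \<in> f ` nbrs E v0" using fn[OF v0(1)] v0(2) by simp
          then obtain u where u: "u \<in> nbrs E v0" "i = f u" by blast
          have uV: "u \<in> V" using u(1) nbrs_sub[OF sg] by blast
          have "degree E u = 1" using deg[OF uV] u(2) i by simp
          then have "u \<in> ?K" using uV u(1) by (simp add: Kset_def)
          then show "i \<in> f ` ?K" using u(2) by blast
        qed
      qed
      then show ?thesis using KU[OF nq] by simp
    qed
    have "card ?K = card (f ` ?K)" using inj_on_subset[OF inj KV] by (simp add: card_image)
    then show "card ?K = 2 * \<Delta> - n - 1" using fK p_def by simp
  qed
qed


lemma sum_ge_card_eq:
  fixes d :: "'a \<Rightarrow> nat"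
  assumes "finite M" "\<forall>m\<in>M. d m \<ge> 1" "(\<Sum>m\<in>M. d m) = card M" "m \<in> M"
  shows "d m = 1"
proof -
  have "(\<Sum>m\<in>M. (1::nat)) = (\<Sum>m\<in>M. d m)" using assms(3) by simp
  then show ?thesis using sum_mono_inv[of "\<lambda>_. 1::nat" M d m] assms by auto
qed

lemma bij_ex_idx:
  assumes "bij_betw f {0..<m} S" "x \<in> S"
  shows "\<exists>j<m. x = f j"
proof -
  have "x \<in> f ` {0..<m}" using assms by (simp add: bij_betw_def)
  then show ?thesis by auto
qed

lemma deg_to_iso:
  assumes sg: "simple_graph V E" and un: "unicyclic V E" and cV: "card V = n" and n5: "n \<ge> 5"
    and hD: "\<Delta> \<le> n - 2" and h2: "n + 2 \<le> 2 * \<Delta>" and v0V: "v0 \<in> V" and dv0: "degree E v0 = \<Delta>"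
    and low: "\<forall>v\<in>V - {v0}. degree E v \<le> 2" and cK: "card (Kset V E v0) = 2 * \<Delta> - n - 1"
  shows "graph_iso V E (U_n_Delta_V n \<Delta>) (U_n_Delta_E n \<Delta>)"
proof -
  define p where "p = 2 * \<Delta> - n - 1"
  define q where "q = n - \<Delta> - 1"
  have nq: "n = 3 + p + 2 * q" and Dq: "\<Delta> = 2 + p + q" using pq_facts[OF hD h2 n5] by (simp_all add: p_def q_def)
  have cn: "connected_graph V E" and ce: "card E = card V" using un by (auto simp: unicyclic_def)
  have fV: "finite V" using sg_finV[OF sg] .
  have fE: "finite E" using sg_finE[OF sg] .
  let ?N = "nbrs E v0" and ?K = "Kset V E v0"
  define W where "W = ?N - ?K"
  define M where "M = V - insert v0 ?N"
  have NV: "?N \<subseteq> V" using nbrs_sub[OF sg] .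
  have fN: "finite ?N" using nbrs_fin[OF sg] .
  have v0N: "v0 \<notin> ?N" using v0_notin_nbrs[OF sg] .
  have cN: "card ?N = \<Delta>" using degree_nbrs[OF sg] dv0 by simp
  have KN: "?K \<subseteq> ?N" by (auto simp: Kset_def)
  have fK: "finite ?K" using finite_subset[OF KN fN] .
  have cKp: "card ?K = p" using cK p_def by simp
  have cW: "card W = q + 2" unfolding W_def using card_Diff_subset[OF fK KN] cN cKp Dq by simp
  have fM: "finite M" using fV by (simp add: M_def)
  have cM: "card M = q"
  proof -
    have sub: "insert v0 ?N \<subseteq> V" using v0V NV by auto
    have "card M = card V - card (insert v0 ?N)" unfolding M_def
      using card_Diff_subset[OF finite_subset[OF sub fV] sub] .
    then show ?thesis using cV cN fN v0N nq Dq by simp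
  qed
  have c2: "card V \<ge> 2" using cV n5 by simp
  have pos: "x \<in> V \<Longrightarrow> degree E x \<ge> 1" for x using conn_degree_pos[OF sg cn _ c2] by blast
  have Kd: "u \<in> ?K \<Longrightarrow> degree E u = 1" for u by (simp add: Kset_def)
  have KV: "u \<in> ?K \<Longrightarrow> u \<in> V" for u by (simp add: Kset_def)
  have Wd: "degree E u = 2" if u: "u \<in> W" for u
  proof -
    have uN: "u \<in> ?N" "u \<notin> ?K" using u by (auto simp: W_def)
    have uV: "u \<in> V" using uN NV by auto
    have "u \<noteq> v0" using uN v0N by auto
    then have "degree E u \<le> 2" using low uV by auto
    moreover have "degree E u \<noteq> 1" using uN uV by (auto simp: Kset_def)
    ultimately show ?thesis using pos[OF uV] by simp
  qed
  have WV: "W \<subseteq> V" using NV by (auto simp: W_def)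
  have MV: "M \<subseteq> V" by (auto simp: M_def)
  have Md: "degree E m = 1" if m: "m \<in> M" for m
  proof -
    have part: "V - {v0} = ?K \<union> W \<union> M" using KN v0V NV v0N unfolding W_def M_def by blast
    have d1: "?K \<inter> W = {}" "(?K \<union> W) \<inter> M = {}" unfolding W_def M_def using KN by auto
    have fW: "finite W" using fN by (simp add: W_def)
    have "(\<Sum>v\<in>V - {v0}. degree E v) = (\<Sum>v\<in>?K \<union> W. degree E v) + (\<Sum>v\<in>M. degree E v)"
      unfolding part by (rule sum.union_disjoint) (use fK fW fM d1 in auto)
    also have "(\<Sum>v\<in>?K \<union> W. degree E v) = (\<Sum>v\<in>?K. degree E v) + (\<Sum>v\<in>W. degree E v)"
      by (rule sum.union_disjoint) (use fK fW d1 in auto)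
    also have "(\<Sum>v\<in>?K. degree E v) = p" using Kd cKp by simp
    also have "(\<Sum>v\<in>W. degree E v) = 2 * (q + 2)" using Wd cW by simp
    finally have s1: "(\<Sum>v\<in>V - {v0}. degree E v) = p + 2 * (q + 2) + (\<Sum>v\<in>M. degree E v)" .
    have "(\<Sum>v\<in>V. degree E v) = degree E v0 + (\<Sum>v\<in>V - {v0}. degree E v)"
      using fV v0V by (simp add: sum.remove)
    moreover have "(\<Sum>v\<in>V. degree E v) = 2 * n" using handshake[OF sg] ce cV by simp
    ultimately have "(\<Sum>v\<in>M. degree E v) = q" using s1 dv0 nq Dq by simp
    then show ?thesis using sum_ge_card_eq[OF fM _ _ m] pos MV cM by auto
  qed
  define s where "s u = (SOME y. y \<in> nbrs E u \<and> y \<noteq> v0)" for u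
  have sW: "s u \<in> nbrs E u" "s u \<noteq> v0" "nbrs E u = {v0, s u}" if u: "u \<in> W" for u
  proof -
    have c: "card (nbrs E u) = 2" using Wd[OF u] degree_nbrs[OF sg] by simp
    have v0u: "v0 \<in> nbrs E u" using u by (auto simp: W_def insert_commute)
    have "\<exists>y. y \<in> nbrs E u \<and> y \<noteq> v0"
    proof (rule ccontr)
      assume "\<not> ?thesis"
      then have "nbrs E u \<subseteq> {v0}" by auto
      then have "card (nbrs E u) \<le> 1" using card_mono[of "{v0}"] by fastforce
      then show False using c by simp
    qed
    then have sp: "s u \<in> nbrs E u \<and> s u \<noteq> v0" unfolding s_def by (rule someI_ex)
    then show "s u \<in> nbrs E u" "s u \<noteq> v0" by auto
    have "{v0, s u} \<subseteq> nbrs E u" using sp v0u by auto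
    moreover have "card {v0, s u} = 2" using sp by auto
    ultimately show "nbrs E u = {v0, s u}" using c nbrs_fin[OF sg] by (metis card_subset_eq)
  qed
  define t where "t m = (THE y. nbrs E m = {y})" for m
  have tM: "nbrs E m = {t m}" if m: "m \<in> M" for m
  proof -
    obtain y where y: "nbrs E m = {y}" using degree1_nbr[OF sg Md[OF m]] by blast
    then have "t m = y" unfolding t_def by auto
    then show ?thesis using y by simp
  qed
  have tW: "t m \<in> W" "s (t m) = m" if m: "m \<in> M" for m
  proof -
    have e: "{m, t m} \<in> E" using tM[OF m] by auto
    have tV: "t m \<in> V" using sg_edge_V[OF sg e] by simp
    have mV: "m \<in> V" "m \<notin> ?N" "m \<noteq> v0" using m by (auto simp: M_def)
    have tv0: "t m \<noteq> v0"
    proof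
      assume "t m = v0"
      then have "{v0, m} \<in> E" using e by (simp add: insert_commute)
      then show False using mV(2) by simp
    qed
    have tK: "t m \<notin> ?K"
    proof
      assume tk: "t m \<in> ?K"
      then have "{v0, t m} \<in> E" by (simp add: Kset_def)
      then have "{t m, v0} \<in> E" by (simp add: insert_commute)
      then have n1: "nbrs E (t m) = {v0}" using degree1_nbr_eq[OF sg Kd[OF tk]] by simp
      have "m \<in> nbrs E (t m)" using e by (simp add: insert_commute)
      then show False using n1 mV(3) by simp
    qed
    have tnM: "t m \<notin> M"
    proof
      assume "t m \<in> M"
      then have "V = {m, t m}" using leaf_leaf[OF sg cn e Md[OF m] Md] by blast
      then have "card V \<le> 2" by (simp add: card_insert_le_m1)
      then show False using cV n5 by simp
    qed
    show tWm: "t m \<in> W" using tV tv0 tK tnM unfolding W_def M_def by auto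
    have "m \<in> nbrs E (t m)" using e by (simp add: insert_commute)
    then show "s (t m) = m" using sW(3)[OF tWm] mV(3) by auto
  qed
  have tinj: "inj_on t M"
  proof
    fix m m' assume "m \<in> M" "m' \<in> M" "t m = t m'"
    then show "m = m'" using tW(2) by metis
  qed
  define W2 where "W2 = t ` M"
  define W1 where "W1 = W - W2"
  have W2W: "W2 \<subseteq> W" using tW(1) by (auto simp: W2_def)
  have cW2: "card W2 = q" using card_image[OF tinj] cM by (simp add: W2_def)
  have fW: "finite W" using fN by (simp add: W_def)
  have cW1: "card W1 = 2" unfolding W1_def using card_Diff_subset[OF finite_subset[OF W2W fW] W2W] cW cW2 by simp
  have sW2: "s u \<in> M" if u: "u \<in> W2" for u
    using u tW(2) unfolding W2_def by auto
  have sW1: "s u \<in> W1" if u: "u \<in> W1" for u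
  proof -
    have uW: "u \<in> W" "u \<notin> W2" using u by (auto simp: W1_def)
    have e: "{u, s u} \<in> E" using sW(1)[OF uW(1)] by simp
    have sV: "s u \<in> V" using sg_edge_V[OF sg e] by simp
    have uv0: "u \<noteq> v0" using uW(1) v0N by (auto simp: W_def)
    have usu: "u \<in> nbrs E (s u)" using e by (simp add: insert_commute)
    have snM: "s u \<notin> M"
    proof
      assume sm: "s u \<in> M"
      then have "u = t (s u)" using tM[OF sm] usu by simp
      then have "u \<in> W2" using sm by (simp add: W2_def)
      then show False using uW(2) by simp
    qed
    have sN: "s u \<in> ?N" using snM sV sW(2)[OF uW(1)] by (auto simp: M_def)
    have snK: "s u \<notin> ?K"
    proof
      assume sk: "s u \<in> ?K"
      then have "{v0, s u} \<in> E" by (simp add: Kset_def)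
      then have "{s u, v0} \<in> E" by (simp add: insert_commute)
      then have "nbrs E (s u) = {v0}" using degree1_nbr_eq[OF sg Kd[OF sk]] by simp
      then show False using usu uv0 by simp
    qed
    have sWW: "s u \<in> W" using sN snK by (simp add: W_def)
    have snW2: "s u \<notin> W2"
    proof
      assume "s u \<in> W2"
      then have ssM: "s (s u) \<in> M" by (rule sW2)
      have "u = s (s u)" using sW(3)[OF sWW] usu uv0 by auto
      then have "u \<in> M" using ssM by simp
      then show False using uW(1) by (auto simp: W_def M_def)
    qed
    show ?thesis using sWW snW2 by (simp add: W1_def)
  qed
  obtain a b where ab: "W1 = {a, b}" "a \<noteq> b" using cW1 by (auto simp: card_2_iff)
  have sa: "s a = b" and sb': "s b = a"
  proof -
    have "a \<in> W1" "b \<in> W1" using ab by auto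
    have ne: "s x \<noteq> x" if "x \<in> W1" for x
    proof
      assume "s x = x"
      have "x \<in> W" using that by (simp add: W1_def)
      then have "{x, s x} \<in> E" using sW(1) by simp
      then show False using \<open>s x = x\<close> sg_edge_ne[OF sg] by fastforce
    qed
    show "s a = b" using sW1[OF \<open>a \<in> W1\<close>] ne[OF \<open>a \<in> W1\<close>] ab by auto
    show "s b = a" using sW1[OF \<open>b \<in> W1\<close>] ne[OF \<open>b \<in> W1\<close>] ab by auto
  qed
  have aW1: "a \<in> W1" "b \<in> W1" using ab by auto
  have W1W: "W1 \<subseteq> W" by (auto simp: W1_def)
  have abE: "{a, b} \<in> E" using sW(1)[of a] sa W1W aW1 by auto
  have WN: "W \<subseteq> ?N" by (auto simp: W_def)
  have partV: "V = insert v0 (?K \<union> W1 \<union> W2 \<union> M)"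
    using v0V KN NV W2W unfolding W1_def W_def M_def by blast
  have cls: "(x = v0 \<and> y \<in> ?N) \<or> (y = v0 \<and> x \<in> ?N) \<or> {x, y} = {a, b} \<or> (\<exists>u\<in>W2. {x, y} = {u, s u})"
    if e: "{x, y} \<in> E" for x y
  proof -
    have xV: "x \<in> V" and yV: "y \<in> V" using sg_edge_V[OF sg e] by auto
    have yx: "y \<in> nbrs E x" using e by simp
    show ?thesis
    proof (cases "x = v0")
      case True then show ?thesis using e by simp
    next
      case xn: False
      show ?thesis
      proof (cases "y = v0")
        case True then show ?thesis using e by (simp add: insert_commute)
      next
        case yn: False
        have "x \<in> ?K \<or> x \<in> W1 \<or> x \<in> W2 \<or> x \<in> M" using partV xV xn by blast
        then consider "x \<in> ?K" | "x \<in> W1" | "x \<in> W2" | "x \<in> M" by blast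
        then show ?thesis
        proof cases
          case 1
          then have "{v0, x} \<in> E" by (simp add: Kset_def)
          then have "{x, v0} \<in> E" by (simp add: insert_commute)
          then have "nbrs E x = {v0}" using degree1_nbr_eq[OF sg Kd[OF 1]] by simp
          then show ?thesis using yx yn by simp
        next
          case 2
          then have xW: "x \<in> W" using W1W by auto
          have "y \<in> {v0, s x}" using yx[unfolded sW(3)[OF xW]] .
          then have "y = s x" using yn by simp
          moreover have "x = a \<or> x = b" using 2 ab by auto
          ultimately show ?thesis using sa sb' by (auto simp: insert_commute)
        next
          case 3
          then have xW: "x \<in> W" using W2W by auto
          have "y \<in> {v0, s x}" using yx[unfolded sW(3)[OF xW]] .
          then have "y = s x" using yn by simp
          then show ?thesis using 3 by blast
        next
          case 4
          then have "y = t x" using tM[OF 4] yx by simp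
          moreover have "t x \<in> W2" using 4 by (simp add: W2_def)
          moreover have "s (t x) = x" using tW(2)[OF 4] .
          ultimately have "{x, y} = {t x, s (t x)}" by (simp add: insert_commute)
          then show ?thesis using \<open>t x \<in> W2\<close> by blast
        qed
      qed
    qed
  qed
  obtain \<kappa> where kap: "bij_betw \<kappa> {0..<p} ?K" using ex_bij_betw_nat_finite[OF fK] cKp by metis
  have fW2: "finite W2" using finite_subset[OF W2W fW] .
  obtain g where g: "bij_betw g {0..<q} W2" using ex_bij_betw_nat_finite[OF fW2] cW2 by metis
  define h where "h i = (if i = 0 then v0 else if i = 1 then a else if i = 2 then b
      else if i < 3 + p then \<kappa> (i - 3) else if even (i - (3 + p)) then g ((i - (3 + p)) div 2)
      else s (g ((i - (3 + p)) div 2)))" for i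
  have h0: "h 0 = v0" and h1: "h 1 = a" and h2: "h 2 = b" by (simp_all add: h_def)
  have h3: "h (3 + j) = \<kappa> j" if "j < p" for j using that by (simp add: h_def)
  have h4: "h (3 + p + 2 * j) = g j" for j by (simp add: h_def)
  have h5: "h (4 + p + 2 * j) = s (g j)" for j
  proof -
    have "4 + p + 2 * j - (3 + p) = 2 * j + 1" by simp
    then show ?thesis by (simp add: h_def)
  qed
  have kK: "j < p \<Longrightarrow> \<kappa> j \<in> ?K" for j using kap by (auto simp: bij_betw_def)
  have gW: "j < q \<Longrightarrow> g j \<in> W2" for j using g by (auto simp: bij_betw_def)
  have img: "h ` {0..<n} = V"
  proof
    show "h ` {0..<n} \<subseteq> V"
    proof
      fix x assume "x \<in> h ` {0..<n}"
      then obtain i where i: "i < n" "x = h i" by auto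
      show "x \<in> V"
      proof (cases "i = 0")
        case True then show ?thesis using i h0 v0V by simp
      next
        case False
        then consider "i = 1" | "i = 2" | "3 \<le> i \<and> i < 3 + p" | "\<exists>t<q. i = 3 + p + 2 * t" | "\<exists>t<q. i = 4 + p + 2 * t"
          using regions[OF nq i(1)] by blast
        then show ?thesis
        proof cases
          case 1 then show ?thesis using i h1 aW1 W1W WV by auto
        next
          case 2 then show ?thesis using i h2 aW1 W1W WV by auto
        next
          case 3
          then have i3: "i - 3 < p" "3 + (i - 3) = i" by linarith+
          then have "x = \<kappa> (i - 3)" using i h3[of "i - 3"] by simp
          then show ?thesis using kK[of "i - 3"] 3 KV by auto
        next
          case 4
          then obtain j where "j < q" "i = 3 + p + 2 * j" by blast
          then show ?thesis using i h4 gW W2W WV by auto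
        next
          case 5
          then obtain j where j: "j < q" "i = 4 + p + 2 * j" by blast
          then have "x = s (g j)" using i h5 by simp
          then show ?thesis using sW2[OF gW[OF j(1)]] MV by auto
        qed
      qed
    qed
    show "V \<subseteq> h ` {0..<n}"
    proof
      fix x assume xV: "x \<in> V"
      have "x = v0 \<or> x \<in> ?K \<or> x \<in> W1 \<or> x \<in> W2 \<or> x \<in> M" using partV xV by blast
      then consider "x = v0" | "x \<in> ?K" | "x \<in> W1" | "x \<in> W2" | "x \<in> M" by blast
      then show "x \<in> h ` {0..<n}"
      proof cases
        case 1 then show ?thesis using h0 nq by force
      next
        case 2
        then obtain j where j: "j < p" "x = \<kappa> j" using bij_ex_idx[OF kap] by blast
        then have "x = h (3 + j)" using h3 by simp
        moreover have "3 + j < n" using j nq by simp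
        ultimately show ?thesis by auto
      next
        case 3
        then have "x = h 1 \<or> x = h 2" using ab h1 h2 by auto
        then show ?thesis using nq by force
      next
        case 4
        then obtain j where j: "j < q" "x = g j" using bij_ex_idx[OF g] by blast
        then have "x = h (3 + p + 2 * j)" using h4 by simp
        moreover have "3 + p + 2 * j < n" using j nq by simp
        ultimately show ?thesis by auto
      next
        case 5
        have "t x \<in> W2" using 5 by (simp add: W2_def)
        then obtain j where j: "j < q" "t x = g j" using bij_ex_idx[OF g] by blast
        then have "x = s (g j)" using tW(2)[OF 5] by simp
        then have "x = h (4 + p + 2 * j)" using h5 by simp
        moreover have "4 + p + 2 * j < n" using j nq by simp
        ultimately show ?thesis by auto
      qed
    qed
  qed
  have injh: "inj_on h {0..<n}"
    by (rule eq_card_imp_inj_on) (use img cV in simp_all)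
  have bijh: "bij_betw h {0..<n} V" using injh img by (simp add: bij_betw_def)
  define f where "f = inv_into {0..<n} h"
  have bijf: "bij_betw f V {0..<n}" unfolding f_def by (rule bij_betw_inv_into[OF bijh])
  have fh: "i < n \<Longrightarrow> f (h i) = i" for i unfolding f_def using injh by simp
  have hf: "x \<in> V \<Longrightarrow> h (f x) = x" for x unfolding f_def using img by (metis f_inv_into_f)
  have fV': "x \<in> V \<Longrightarrow> f x < n" for x using bijf by (auto simp: bij_betw_def)
  have fv0: "f v0 = 0" using fh[of 0] h0 nq by simp
  have fa: "f a = 1" using fh[of 1] h1 nq by simp
  have fb: "f b = 2" using fh[of 2] h2 nq by simp
  have fk: "j < p \<Longrightarrow> f (\<kappa> j) = 3 + j" for j using fh[of "3 + j"] h3 nq by simp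
  have fg: "j < q \<Longrightarrow> f (g j) = 3 + p + 2 * j" for j using fh[of "3 + p + 2 * j"] h4 nq by simp
  have fs: "j < q \<Longrightarrow> f (s (g j)) = 4 + p + 2 * j" for j using fh[of "4 + p + 2 * j"] h5 nq by simp
  have UE: "{i, j} \<in> U_n_Delta_E n \<Delta> \<longleftrightarrow> UEp p q i j \<or> UEp p q j i" for i j
    unfolding p_def q_def by (rule UE_iff)
  have nb0: "UEp p q 0 (f z)" if z: "z \<in> ?N" for z
  proof -
    have "z \<in> ?K \<or> z \<in> W1 \<or> z \<in> W2" using z W2W unfolding W1_def W_def by blast
    then consider "z \<in> ?K" | "z \<in> W1" | "z \<in> W2" by blast
    then show ?thesis
    proof cases
      case 1
      then obtain j where j: "j < p" "z = \<kappa> j" using bij_ex_idx[OF kap] by blast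
      then show ?thesis using fk by (simp add: UEp_def)
    next
      case 2
      then have "z = a \<or> z = b" using ab by auto
      then show ?thesis using fa fb by (auto simp: UEp_def)
    next
      case 3
      then obtain j where j: "j < q" "z = g j" using bij_ex_idx[OF g] by blast
      then show ?thesis using fg by (auto simp: UEp_def)
    qed
  qed
  have bk: "{h i, h j} \<in> E" if u: "UEp p q i j" "i < n" "j < n" for i j
  proof -
    have aN: "a \<in> ?N" "b \<in> ?N" using aW1 W1W WN by auto
    consider "i = 0 \<and> j = 1" | "i = 1 \<and> j = 2" | "i = 0 \<and> j = 2" | "i = 0 \<and> 3 \<le> j \<and> j < 3 + p"
      | "i = 0 \<and> (\<exists>t<q. j = 3 + p + 2 * t)" | "\<exists>t<q. i = 3 + p + 2 * t \<and> j = 4 + p + 2 * t"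
      using u(1) unfolding UEp_def by blast
    then show ?thesis
    proof cases
      case 1 then show ?thesis using h0 h1 aN by simp
    next
      case 2 then show ?thesis using h1 h2 abE by simp
    next
      case 3 then show ?thesis using h0 h2 aN by simp
    next
      case 4
      then have j3: "j - 3 < p" "3 + (j - 3) = j" by linarith+
      then have "h j = \<kappa> (j - 3)" using h3[of "j - 3"] by simp
      have "\<kappa> (j - 3) \<in> ?K" using kK j3(1) by blast
      then have "h j \<in> ?N" using KN \<open>h j = \<kappa> (j - 3)\<close> by auto
      then show ?thesis using 4 h0 by simp
    next
      case 5
      then obtain t where t: "t < q" "j = 3 + p + 2 * t" by blast
      have "g t \<in> W2" using gW t(1) by blast
      then have "g t \<in> ?N" using W2W WN by blast
      then have "h j \<in> ?N" using h4 t(2) by simp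
      then show ?thesis using 5 h0 by simp
    next
      case 6
      then obtain t where t: "t < q" "i = 3 + p + 2 * t" "j = 4 + p + 2 * t" by blast
      have "g t \<in> W" using gW[OF t(1)] W2W by auto
      then have "{g t, s (g t)} \<in> E" using sW(1) by simp
      then show ?thesis using t h4 h5 by simp
    qed
  qed
  show ?thesis
    unfolding graph_iso_def U_n_Delta_V_def
  proof (intro exI conjI ballI)
    show "bij_betw f V {0..<n}" by (rule bijf)
    fix x y assume xV: "x \<in> V" and yV: "y \<in> V"
    show "{x, y} \<in> E \<longleftrightarrow> {f x, f y} \<in> U_n_Delta_E n \<Delta>"
    proof
      assume e: "{x, y} \<in> E"
      show "{f x, f y} \<in> U_n_Delta_E n \<Delta>"
        unfolding UE
      proof -
        consider "x = v0 \<and> y \<in> ?N" | "y = v0 \<and> x \<in> ?N" | "{x, y} = {a, b}" | "\<exists>u\<in>W2. {x, y} = {u, s u}"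
          using cls[OF e] by blast
        then show "UEp p q (f x) (f y) \<or> UEp p q (f y) (f x)"
        proof cases
          case 1 then show ?thesis using nb0 fv0 by auto
        next
          case 2 then show ?thesis using nb0 fv0 by auto
        next
          case 3
          then have "(x = a \<and> y = b) \<or> (x = b \<and> y = a)" by (auto simp: doubleton_eq_iff)
          then show ?thesis using fa fb by (auto simp: UEp_def)
        next
          case 4
          then obtain u where u: "u \<in> W2" "{x, y} = {u, s u}" by blast
          then obtain j where j: "j < q" "u = g j" using bij_ex_idx[OF g] by blast
          have "UEp p q (f u) (f (s u))" using j fg fs by (auto simp: UEp_def)
          moreover have "(x = u \<and> y = s u) \<or> (x = s u \<and> y = u)" using u(2) by (auto simp: doubleton_eq_iff)
          ultimately show ?thesis by auto
        qed
      qed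
    next
      assume "{f x, f y} \<in> U_n_Delta_E n \<Delta>"
      then have "UEp p q (f x) (f y) \<or> UEp p q (f y) (f x)" using UE by simp
      then show "{x, y} \<in> E"
      proof
        assume "UEp p q (f x) (f y)"
        then have "{h (f x), h (f y)} \<in> E" using bk fV' xV yV by simp
        then show ?thesis using hf xV yV by simp
      next
        assume "UEp p q (f y) (f x)"
        then have "{h (f y), h (f x)} \<in> E" using bk fV' xV yV by simp
        then show ?thesis using hf xV yV by (simp add: insert_commute)
      qed
    qed
  qed
qed


lemma T_eq:
  fixes n \<Delta> :: nat
  shows "real n * sqrt 8 + real \<Delta> * sA \<Delta> + sb * (2 - real \<Delta>) =
     real \<Delta> * sqrt (real \<Delta> ^ 2 + 4) + sqrt 8 * (real n - 2 * real \<Delta> + 2) + sqrt 5 * (real \<Delta> - 2)"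
  unfolding sA_def sb_def by (simp add: algebra_simps)

lemma T2_eq:
  fixes n \<Delta> :: nat
  shows "real \<Delta> * sqrt (real \<Delta> ^ 2 + 4) + sqrt 8 * (real n - 2 * real \<Delta> + 2) + sqrt 5 * (real \<Delta> - 2)
     + sdel \<Delta> * (2 * real \<Delta> - real n - 1) =
     (real n - real \<Delta> + 1) * sqrt (real \<Delta> ^ 2 + 4) + (2 * real \<Delta> - real n - 1) * sqrt (real \<Delta> ^ 2 + 1)
     + sqrt 5 * (real n - real \<Delta> - 1) + sqrt 8"
  unfolding sdel_def sb_def by (simp add: algebra_simps)

theorem theorem1p2:
  fixes V :: "'a set" and E :: "'a set set" and n \<Delta> :: nat
  assumes "simple_graph V E" and "unicyclic V E"
    and "card V = n" and "n \<ge> 5"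
    and "3 \<le> \<Delta>" and "\<Delta> \<le> n - 2"
    and "max_degree V E = \<Delta>"
  shows "(\<Delta> \<le> (n + 1) div 2 \<longrightarrow>
            sombor E \<ge> real \<Delta> * sqrt (real \<Delta> ^ 2 + 4) + sqrt 8 * (real n - 2 * real \<Delta> + 2)
                        + sqrt 5 * (real \<Delta> - 2) \<and>
            (sombor E = real \<Delta> * sqrt (real \<Delta> ^ 2 + 4) + sqrt 8 * (real n - 2 * real \<Delta> + 2)
                        + sqrt 5 * (real \<Delta> - 2) \<longleftrightarrow> is_U_Delta V E \<Delta>))
       \<and> ((n + 1) div 2 < \<Delta> \<longrightarrow>
            sombor E \<ge> (real n - real \<Delta> + 1) * sqrt (real \<Delta> ^ 2 + 4)
                        + (2 * real \<Delta> - real n - 1) * sqrt (real \<Delta> ^ 2 + 1)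
                        + sqrt 5 * (real n - real \<Delta> - 1) + sqrt 8 \<and>
            (sombor E = (real n - real \<Delta> + 1) * sqrt (real \<Delta> ^ 2 + 4)
                        + (2 * real \<Delta> - real n - 1) * sqrt (real \<Delta> ^ 2 + 1)
                        + sqrt 5 * (real n - real \<Delta> - 1) + sqrt 8
             \<longleftrightarrow> graph_iso V E (U_n_Delta_V n \<Delta>) (U_n_Delta_E n \<Delta>)))"
proof -
  note sg = assms(1) and un = assms(2) and cV = assms(3) and n5 = assms(4) and D3 = assms(5)
    and hD = assms(6) and md = assms(7)
  have cn: "connected_graph V E" and ce: "card E = card V" using un by (auto simp: unicyclic_def)
  have fV: "finite V" using sg_finV[OF sg] .
  have Vne: "V \<noteq> {}" using cV n5 by auto
  have mx: "\<forall>v\<in>V. degree E v \<le> \<Delta>"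
    using md fV unfolding max_degree_def by auto
  have "\<Delta> \<in> degree E ` V" using md fV Vne unfolding max_degree_def by (metis Max_in finite_imageI image_is_empty)
  then obtain v0 where v0V: "v0 \<in> V" and dv0: "degree E v0 = \<Delta>" by (metis imageE)
  have n3: "card V \<ge> 3" using cV n5 by simp
  let ?T = "real \<Delta> * sqrt (real \<Delta> ^ 2 + 4) + sqrt 8 * (real n - 2 * real \<Delta> + 2) + sqrt 5 * (real \<Delta> - 2)"
  let ?T2 = "(real n - real \<Delta> + 1) * sqrt (real \<Delta> ^ 2 + 4) + (2 * real \<Delta> - real n - 1) * sqrt (real \<Delta> ^ 2 + 1)
                        + sqrt 5 * (real n - real \<Delta> - 1) + sqrt 8"
  have Teq: "real (card V) * sqrt 8 + real \<Delta> * sA \<Delta> + sb * (2 - real \<Delta>) = ?T"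
    using T_eq[of n \<Delta>] cV by simp
  have T2eq: "?T + sdel \<Delta> * (2 * real \<Delta> - real n - 1) = ?T2" by (rule T2_eq)
  have sdp: "sdel \<Delta> > 0" using sdel_pos[OF D3] .
  have sbp: "sb > 0" by (rule sb_pos)
  have Mi: "sombor E \<ge> ?T + sdel \<Delta> * real (card (Kset V E w)) + sb * real (card (Hset V E w))"
    if "w \<in> V" "degree E w = \<Delta>" for w
    using main_ineq(1)[OF sg cn ce n3 that D3] Teq by simp
  have Meq: "sombor E = ?T + sdel \<Delta> * real (card (Kset V E w))"
    if "w \<in> V" "degree E w = \<Delta>" "\<forall>v\<in>V - {w}. degree E v \<le> 2" for w
    using main_ineq(2)[OF sg cn ce n3 that(1,2) D3 that(3)] Teq by simp
  have fK: "finite (Kset V E w)" for w using fV by (simp add: Kset_def)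
  have fH: "finite (Hset V E w)" for w using fV by (simp add: Hset_def)
  have H0: "\<forall>v\<in>V - {w}. degree E v \<le> 2" if "card (Hset V E w) = 0" for w
  proof
    fix v assume v: "v \<in> V - {w}"
    have "Hset V E w = {}" using that fH[of w] by simp
    then have "\<not> degree E v \<ge> 3" using v by (auto simp: Hset_def)
    then show "degree E v \<le> 2" by simp
  qed
  have Mz: "sombor E \<ge> ?T + sdel \<Delta> * real (card (Kset V E v0))"
    using Mi[OF v0V dv0] sbp by (smt (verit) mult_nonneg_nonneg of_nat_0_le_iff)
  show ?thesis
  proof (intro conjI impI)
    assume "\<Delta> \<le> (n + 1) div 2"
    show "sombor E \<ge> ?T" using Mz sdp by (smt (verit) mult_nonneg_nonneg of_nat_0_le_iff)
    show "sombor E = ?T \<longleftrightarrow> is_U_Delta V E \<Delta>"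
    proof
      assume eq: "sombor E = ?T"
      have "sdel \<Delta> * real (card (Kset V E v0)) + sb * real (card (Hset V E v0)) \<le> 0"
        using Mi[OF v0V dv0] eq by simp
      moreover have "sdel \<Delta> * real (card (Kset V E v0)) \<ge> 0" "sb * real (card (Hset V E v0)) \<ge> 0"
        using sdp sbp by simp_all
      ultimately have "sdel \<Delta> * real (card (Kset V E v0)) = 0" "sb * real (card (Hset V E v0)) = 0"
        by linarith+
      then have k0: "card (Kset V E v0) = 0" and h0: "card (Hset V E v0) = 0" using sdp sbp by simp_all
      have low: "\<forall>v\<in>V - {v0}. degree E v \<le> 2" using H0[OF h0] .
      have K0: "Kset V E v0 = {}" using k0 fK[of v0] by simp
      have nb: "\<forall>u\<in>nbrs E v0. degree E u = 2"
      proof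
        fix u assume u: "u \<in> nbrs E v0"
        have uE: "{v0, u} \<in> E" using u by simp
        have uV: "u \<in> V" "u \<noteq> v0" using sg_edge_V[OF sg uE] sg_edge_ne[OF sg uE] by auto
        have "degree E u \<le> 2" using low uV by auto
        moreover have "degree E u \<ge> 1" using conn_degree_pos[OF sg cn uV(1)] n3 by simp
        moreover have "degree E u \<noteq> 1" using K0 uV(1) uE by (auto simp: Kset_def)
        ultimately show "degree E u = 2" by simp
      qed
      show "is_U_Delta V E \<Delta>" using U_Delta_iff[OF sg un D3] v0V dv0 low nb by blast
    next
      assume "is_U_Delta V E \<Delta>"
      then obtain w where w: "w \<in> V" "degree E w = \<Delta>" "\<forall>v\<in>V - {w}. degree E v \<le> 2"
        "\<forall>u\<in>nbrs E w. degree E u = 2" using U_Delta_iff[OF sg un D3] by blast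
      have "Kset V E w = {}" using w(4) by (auto simp: Kset_def)
      then show "sombor E = ?T" using Meq[OF w(1-3)] by simp
    qed
  next
    assume lt: "(n + 1) div 2 < \<Delta>"
    have h2: "n + 2 \<le> 2 * \<Delta>" using lt by linarith
    have rk: "real (card (Kset V E v0)) \<ge> 2 * real \<Delta> - real n - 1"
    proof -
      have "card V + card (Kset V E v0) + 1 \<ge> 2 * degree E v0" using count_K[OF sg un v0V n3] .
      then have "real n + real (card (Kset V E v0)) + 1 \<ge> 2 * real \<Delta>" using cV dv0 by linarith
      then show ?thesis by linarith
    qed
    have "sdel \<Delta> * real (card (Kset V E v0)) \<ge> sdel \<Delta> * (2 * real \<Delta> - real n - 1)"
      using rk sdp by (simp add: mult_left_mono)
    then show "sombor E \<ge> ?T2" using Mz T2eq by linarith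
    have rp: "real (2 * \<Delta> - n - 1) = 2 * real \<Delta> - real n - 1" using h2 by (simp add: of_nat_diff)
    show "sombor E = ?T2 \<longleftrightarrow> graph_iso V E (U_n_Delta_V n \<Delta>) (U_n_Delta_E n \<Delta>)"
    proof
      assume eq: "sombor E = ?T2"
      have a: "sdel \<Delta> * (real (card (Kset V E v0)) - (2 * real \<Delta> - real n - 1)) + sb * real (card (Hset V E v0)) \<le> 0"
        using Mi[OF v0V dv0] eq T2eq by (simp add: algebra_simps)
      have b: "sdel \<Delta> * (real (card (Kset V E v0)) - (2 * real \<Delta> - real n - 1)) \<ge> 0"
        using sdp rk by simp
      have c: "sb * real (card (Hset V E v0)) \<ge> 0" using sbp by simp
      have "sdel \<Delta> * (real (card (Kset V E v0)) - (2 * real \<Delta> - real n - 1)) = 0"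
        "sb * real (card (Hset V E v0)) = 0" using a b c by linarith+
      then have kk: "real (card (Kset V E v0)) = 2 * real \<Delta> - real n - 1"
        and h0: "card (Hset V E v0) = 0" using sdp sbp by simp_all
      have kn: "card (Kset V E v0) = 2 * \<Delta> - n - 1" using kk rp by linarith
      have low: "\<forall>v\<in>V - {v0}. degree E v \<le> 2" using H0[OF h0] .
      show "graph_iso V E (U_n_Delta_V n \<Delta>) (U_n_Delta_E n \<Delta>)"
        using deg_to_iso[OF sg un cV n5 hD h2 v0V dv0 low kn] .
    next
      assume iso: "graph_iso V E (U_n_Delta_V n \<Delta>) (U_n_Delta_E n \<Delta>)"
      obtain w where w: "w \<in> V" "degree E w = \<Delta>" "\<forall>v\<in>V - {w}. degree E v \<le> 2"
        "card (Kset V E w) = 2 * \<Delta> - n - 1"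
        using iso_to_deg[OF sg cV n5 hD h2 mx iso] by blast
      have s: "sombor E = ?T + sdel \<Delta> * real (card (Kset V E w))" using Meq[OF w(1-3)] .
      have r: "real (card (Kset V E w)) = 2 * real \<Delta> - real n - 1" using w(4) rp by simp
      have "sombor E = ?T + sdel \<Delta> * (2 * real \<Delta> - real n - 1)" using s unfolding r .
      then show "sombor E = ?T2" using T2eq by linarith
    qed
  qed
qed


end
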